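(* A strong CCTRS $\mathcal R$ is quasi-decreasing (i.e., every term in $\mathcal T(\mathcal F,\mathcal V)$ is quasi-decreasing) if and only if the context-sensitive TRS $(\Xi(\mathcal R),\mu)$ is terminating on all terms in the set $\{\zeta(s)\mid s\in\mathcal T(\mathcal G,\mathcal V)\}$.
   Context: A CCTRS over $\mathcal F$ is a set $\mathcal R$ of conditional rules each of the form $f(\ell_1,\dots,\ell_n)\to r\Leftarrow a_1\approx b_1,\dots,a_k\approx b_k$ (defined symbols are roots of left-hand sides, others constructors; constructor terms contain only constructors and variables) where $\ell_1,\dots,\ell_n,b_1,\dots,b_k$ are constructor terms, the terms $f(\ell_1,\dots,\ell_n),b_1,\dots,b_k$ pairwise share no variables, $\mathrm{Var}(r)\subseteq\mathrm{Var}(\ell_1,\dots,\ell_n,b_1,\dots,b_k)$, and $\mathrm{Var}(a_i)\subseteq\mathrm{Var}(\ell_1,\dots,\ell_n,b_1,\dots,b_{i-1})$. The rewrite relation: $s\to_{\mathcal R}t$ iff there are a position $p$, a rule and $\sigma$ with $s|_p=\ell\sigma$, $t=s[r\sigma]_p$ and $a_j\sigma\to^*_{\mathcal R}b_j\sigma$ for all $j$ (formally the union of the standard approximations). $\mathcal R{\restriction}f$ is the set of rules with left-hand root $f$. A strong CCTRS is a CCTRS with each $\mathcal R{\restriction}f$ finite and each $f(\ell_1,\dots,\ell_n)$ and $b_j$ linear. Let $m_f=|\mathcal R{\restriction}f|$ (0 for constructors), with fixed enumeration $\rho^f_1,\dots,\rho^f_{m_f}$. Write $s\sqsupset t$ if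 there are a position $p$, a rule, $\sigma$ and $1\le i\le k$ with $s|_p=\ell\sigma$, $a_j\sigma\to^*b_j\sigma$ for $j<i$ and $t=a_i\sigma$; a term $s$ is quasi-decreasing if there is no infinite sequence $s=u_0\,(\to\cup\sqsupset)\,u_1\,(\to\cup\sqsupset)\cdots$. $\mathcal G$ is the labeled signature: constructors of $\mathcal F$ plus symbols $f_R$ (same arity as $f$) for each defined $f$ and $R\subseteq\mathcal R{\restriction}f$. The transformed system: signature $\mathcal H$ with constants $\bot,\top$ ($\mu=\emptyset$); every $f\in\mathcal F$ of arity $n$ as a symbol of arity $n+m_f$ with $\mu(f)=\{1,\dots,n\}$; and for every defined $f$ of arity $n$, every $\rho^f_i$ with $k>0$ conditions and $1\le j\le k$ a symbol $f_i^j$ of arity $n+m_f+j-1$ with $\mu(f_i^j)=\{n+i+j-1\}$. A position is active in $t$ if it is $\epsilon$ or $iq$ with $i\in\mu(\mathrm{root}(t))$ and $q$ active in $t|_i$; $\to_{\Xi(\mathcal R),\mu}$ rewrites only at active positions. $\xi_\star$ ($\star\in\{\bot,\top\}$): identity on variables, homomorphic on constructors, $f(t_1..t_n)\mapsto f(\xi_\star(t_1),\dots,\xi_\star(t_n),\star,\dots,\star)$ ($m_f$ copies) for defined $f$. For a linear constructor term $t$: $\mathrm{AP}(x)=\emptyset$, and $\mathrm{AP}(f(t_1,\dots,t_n))$ consists of $g(x_1,\dots,x_m)$ for every constructor $g\neq f$ of arity $m$, $g(x_1,\dots,x_m,\bot,\dots,\bot)$ for every defined $g$ of arity $m$, and $f(x_1,\dots,x_{i-1},u,x_{i+1},\dots,x_n)$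 for $u\in\mathrm{AP}(t_i)$ (fresh distinct $x$'s). Notation: $\langle t_1,\dots,t_n\rangle[u_1,\dots,u_j]_i$ is $t_1,\dots,t_{i-1},u_1,\dots,u_j,t_{i+1},\dots,t_n$. For the $i$-th rule $\rho_i\colon f(\vec\ell)\to r\Leftarrow a_1\approx b_1,\dots,a_k\approx b_k$ of $\mathcal R{\restriction}f$ and fresh distinct $x_1,\dots,x_{m_f},y_1,\dots,y_n$, $\Xi(\mathcal R)$ contains: $(1)$ if $k=0$: $f(\vec\ell,\langle\vec x\rangle[\top]_i)\to\xi_\top(r)$; if $k>0$: $(2)$ $f(\vec\ell,\langle\vec x\rangle[\top]_i)\to f_i^1(\vec\ell,\langle\vec x\rangle[\xi_\top(a_1)]_i)$, $(3)$ $f_i^k(\vec\ell,\langle\vec x\rangle[b_1,\dots,b_k]_i)\to\xi_\top(r)$, $(4)$ for $1\le j<k$: $f_i^j(\vec\ell,\langle\vec x\rangle[b_1,\dots,b_j]_i)\to f_i^{j+1}(\vec\ell,\langle\vec x\rangle[b_1,\dots,b_j,\xi_\top(a_{j+1})]_i)$, $(5)$ for $1\le j\le k$ and $v\in\mathrm{AP}(b_j)$ (fresh variables): $f_i^j(\vec\ell,\langle\vec x\rangle[b_1,\dots,b_{j-1},v]_i)\to f(\vec\ell,\langle\vec x\rangle[\bot]_i)$; and for any $k$: $(6)$ for $1\le j\le n$ and $v\in\mathrm{AP}(\ell_j)$ (fresh variables): $f(\langle\vec y\rangle[v]_j,\langle\vec x\rangle[\top]_i)\to f(\langle\vec y\rangle[v]_j,\langle\vec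 x\rangle[\bot]_i)$. The map $\zeta\colon\mathcal T(\mathcal G,\mathcal V)\to\mathcal T(\mathcal H,\mathcal V)$: identity on variables, homomorphic on constructors, $\zeta(f_R(t_1,\dots,t_n))=f(\zeta(t_1),\dots,\zeta(t_n),c_1,\dots,c_{m_f})$ with $c_i=\top$ iff $\rho^f_i\in R$, else $\bot$. *)

theory Defs
  imports Main
begin

datatype ('f, 'v) "term" = Var 'v | Fun 'f "('f, 'v) term list"

fun vars_list :: "('f, 'v) term \<Rightarrow> 'v list" where
  "vars_list (Var x) = [x]"
| "vars_list (Fun f ts) = concat (map vars_list ts)"

definition vars :: "('f, 'v) term \<Rightarrow> 'v set" where
  "vars t = set (vars_list t)"

definition linear :: "('f, 'v) term \<Rightarrow> bool" where
  "linear t \<longleftrightarrow> distinct (vars_list t)"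

fun funs :: "('f, 'v) term \<Rightarrow> 'f set" where
  "funs (Var x) = {}"
| "funs (Fun f ts) = insert f (\<Union>t \<in> set ts. funs t)"

fun root :: "('f, 'v) term \<Rightarrow> 'f option" where
  "root (Var x) = None"
| "root (Fun f ts) = Some f"

fun wf_term :: "('f \<Rightarrow> nat) \<Rightarrow> ('f, 'v) term \<Rightarrow> bool" where
  "wf_term ar (Var x) = True"
| "wf_term ar (Fun f ts) = (length ts = ar f \<and> (\<forall>t \<in> set ts. wf_term ar t))"

fun subst :: "('v \<Rightarrow> ('f, 'v) term) \<Rightarrow> ('f, 'v) term \<Rightarrow> ('f, 'v) term" where
  "subst \<sigma> (Var x) = \<sigma> x"
| "subst \<sigma> (Fun f ts) = Fun f (map (subst \<sigma>) ts)"

datatype ('f, 'v) ctxt = Hole | More 'f "('f, 'v) term list" "('f, 'v) ctxt" "('f, 'v) term list"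

fun plug :: "('f, 'v) ctxt \<Rightarrow> ('f, 'v) term \<Rightarrow> ('f, 'v) term" where
  "plug Hole t = t"
| "plug (More f ss C ts) t = Fun f (ss @ plug C t # ts)"

text \<open>A context whose hole is at an active position w.r.t. a replacement map mu
  (argument positions are numbered from 1).\<close>
fun active_ctxt :: "('f \<Rightarrow> nat set) \<Rightarrow> ('f, 'v) ctxt \<Rightarrow> bool" where
  "active_ctxt \<mu> Hole = True"
| "active_ctxt \<mu> (More f ss C ts) = (Suc (length ss) \<in> \<mu> f \<and> active_ctxt \<mu> C)"

section \<open>Conditional constructor TRSs\<close>

text \<open>A conditional rule f(l1..ln) -> r <= a1 ~ b1, ..., ak ~ bk is represented as
  (lhs, rhs, [(a1,b1),...,(ak,bk)]).\<close>
type_synonym ('f, 'v) crule = "('f, 'v) term \<times> ('f, 'v) term \<times> (('f, 'v) term \<times> ('f, 'v) term) list"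

definition defined :: "('f, 'v) crule set \<Rightarrow> 'f \<Rightarrow> bool" where
  "defined R f \<longleftrightarrow> (\<exists>\<rho> \<in> R. root (fst \<rho>) = Some f)"

definition rules_of :: "('f, 'v) crule set \<Rightarrow> 'f \<Rightarrow> ('f, 'v) crule set" where
  "rules_of R f = {\<rho> \<in> R. root (fst \<rho>) = Some f}"

definition constr_term :: "('f, 'v) crule set \<Rightarrow> ('f, 'v) term \<Rightarrow> bool" where
  "constr_term R t \<longleftrightarrow> (\<forall>g \<in> funs t. \<not> defined R g)"

definition pairwise_var_disjoint :: "('f, 'v) term list \<Rightarrow> bool" where
  "pairwise_var_disjoint ts \<longleftrightarrow>
     (\<forall>i j. i < length ts \<and> j < length ts \<and> i \<noteq> j \<longrightarrow> vars (ts ! i) \<inter> vars (ts ! j) = {})"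

definition cctrs :: "('f \<Rightarrow> nat) \<Rightarrow> ('f, 'v) crule set \<Rightarrow> bool" where
  "cctrs ar R \<longleftrightarrow> (\<forall>\<rho> \<in> R. \<exists>f ls r cs. \<rho> = (Fun f ls, r, cs) \<and>
      wf_term ar (Fun f ls) \<and> wf_term ar r \<and>
      (\<forall>(a, b) \<in> set cs. wf_term ar a \<and> wf_term ar b) \<and>
      (\<forall>l \<in> set ls. constr_term R l) \<and>
      (\<forall>(a, b) \<in> set cs. constr_term R b) \<and>
      pairwise_var_disjoint (Fun f ls # map snd cs) \<and>
      vars r \<subseteq> vars (Fun f ls) \<union> (\<Union>b \<in> set (map snd cs). vars b) \<and>
      (\<forall>i < length cs. vars (fst (cs ! i)) \<subseteq>
          vars (Fun f ls) \<union> (\<Union>b \<in> set (take i (map snd cs)). vars b)))"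

definition strong_cctrs :: "('f \<Rightarrow> nat) \<Rightarrow> ('f, 'v) crule set \<Rightarrow> bool" where
  "strong_cctrs ar R \<longleftrightarrow> cctrs ar R \<and> (\<forall>f. finite (rules_of R f)) \<and>
     (\<forall>\<rho> \<in> R. linear (fst \<rho>) \<and> (\<forall>(a, b) \<in> set (snd (snd \<rho>)). linear b))"

text \<open>The rewrite relation of a CCTRS (least fixed point = union of the approximations).\<close>
inductive rstep :: "('f, 'v) crule set \<Rightarrow> ('f, 'v) term \<Rightarrow> ('f, 'v) term \<Rightarrow> bool"
  for R where
  "(l, r, cs) \<in> R \<Longrightarrow>
   (\<forall>j < length cs. (rstep R)\<^sup>*\<^sup>* (subst \<sigma> (fst (cs ! j))) (subst \<sigma> (snd (cs ! j)))) \<Longrightarrow>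
   rstep R (plug C (subst \<sigma> l)) (plug C (subst \<sigma> r))"

definition sqsup :: "('f, 'v) crule set \<Rightarrow> ('f, 'v) term \<Rightarrow> ('f, 'v) term \<Rightarrow> bool" where
  "sqsup R s t \<longleftrightarrow> (\<exists>C l r cs \<sigma> i. (l, r, cs) \<in> R \<and> i < length cs \<and>
      s = plug C (subst \<sigma> l) \<and>
      (\<forall>j < i. (rstep R)\<^sup>*\<^sup>* (subst \<sigma> (fst (cs ! j))) (subst \<sigma> (snd (cs ! j)))) \<and>
      t = subst \<sigma> (fst (cs ! i)))"

definition quasi_decreasing_term :: "('f, 'v) crule set \<Rightarrow> ('f, 'v) term \<Rightarrow> bool" where
  "quasi_decreasing_term R s \<longleftrightarrow>
     \<not> (\<exists>u. u 0 = s \<and> (\<forall>i. rstep R (u i) (u (Suc i)) \<or> sqsup R (u i) (u (Suc i))))"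

definition quasi_decreasing :: "('f \<Rightarrow> nat) \<Rightarrow> ('f, 'v) crule set \<Rightarrow> bool" where
  "quasi_decreasing ar R \<longleftrightarrow> (\<forall>s. wf_term ar s \<longrightarrow> quasi_decreasing_term R s)"

definition enumeration :: "('f, 'v) crule set \<Rightarrow> ('f \<Rightarrow> ('f, 'v) crule list) \<Rightarrow> bool" where
  "enumeration R enum \<longleftrightarrow> (\<forall>f. distinct (enum f) \<and> set (enum f) = rules_of R f)"

section \<open>The labeled signature G\<close>

text \<open>GCon c: a constructor of F; GLab f S: the labeled symbol f_S.\<close>
datatype ('f, 'v) gsym = GCon 'f | GLab 'f "('f, 'v) crule set"

fun wf_gterm :: "('f \<Rightarrow> nat) \<Rightarrow> ('f, 'v) crule set \<Rightarrow> (('f, 'v) gsym, 'v) term \<Rightarrow> bool" where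
  "wf_gterm ar R (Var x) = True"
| "wf_gterm ar R (Fun (GCon c) ts) = (\<not> defined R c \<and> length ts = ar c \<and> (\<forall>t \<in> set ts. wf_gterm ar R t))"
| "wf_gterm ar R (Fun (GLab f S) ts) = (defined R f \<and> S \<subseteq> rules_of R f \<and>
      length ts = ar f \<and> (\<forall>t \<in> set ts. wf_gterm ar R t))"

section \<open>The transformed signature H and the system Xi(R)\<close>

text \<open>Bot, Top; Orig f: f with arity n + m_f; Aux f i j: the symbol f_i^j (i, j counted from 1).\<close>
datatype 'f hsym = Bot | Top | Orig 'f | Aux 'f nat nat

definition mcount :: "('f \<Rightarrow> ('f, 'v) crule list) \<Rightarrow> 'f \<Rightarrow> nat" where
  "mcount enum f = length (enum f)"

definition ar_H :: "('f \<Rightarrow> nat) \<Rightarrow> ('f \<Rightarrow> ('f, 'v) crule list) \<Rightarrow> 'f hsym \<Rightarrow> nat" where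
  "ar_H ar enum g = (case g of Bot \<Rightarrow> 0 | Top \<Rightarrow> 0
      | Orig f \<Rightarrow> ar f + mcount enum f
      | Aux f i j \<Rightarrow> ar f + mcount enum f + j - 1)"

definition mu_H :: "('f \<Rightarrow> nat) \<Rightarrow> 'f hsym \<Rightarrow> nat set" where
  "mu_H ar g = (case g of Bot \<Rightarrow> {} | Top \<Rightarrow> {}
      | Orig f \<Rightarrow> {1 .. ar f}
      | Aux f i j \<Rightarrow> {ar f + i + j - 1})"

abbreviation hconst :: "'f hsym \<Rightarrow> ('f hsym, 'v) term" where
  "hconst c \<equiv> Fun c []"

text \<open>xi_star; constructors have m_f = 0, so no extra arguments are added for them.\<close>
fun xi :: "('f \<Rightarrow> ('f, 'v) crule list) \<Rightarrow> 'f hsym \<Rightarrow> ('f, 'v) term \<Rightarrow> ('f hsym, 'v) term" where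
  "xi enum st (Var x) = Var x"
| "xi enum st (Fun f ts) = Fun (Orig f) (map (xi enum st) ts @ replicate (mcount enum f) (hconst st))"

fun emb :: "('f, 'v) term \<Rightarrow> ('f hsym, 'v) term" where
  "emb (Var x) = Var x"
| "emb (Fun f ts) = Fun (Orig f) (map emb ts)"

text \<open>AP(t) up to the choice of variables; linearity and freshness are imposed where used.\<close>
inductive ap :: "('f \<Rightarrow> nat) \<Rightarrow> ('f, 'v) crule set \<Rightarrow> ('f \<Rightarrow> ('f, 'v) crule list) \<Rightarrow>
    ('f, 'v) term \<Rightarrow> ('f hsym, 'v) term \<Rightarrow> bool"
  for ar R enum where
  ap_constr: "g \<noteq> f \<Longrightarrow> \<not> defined R g \<Longrightarrow> length xs = ar g \<Longrightarrow>
     ap ar R enum (Fun f ts) (Fun (Orig g) (map Var xs))"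
| ap_defined: "defined R g \<Longrightarrow> length xs = ar g \<Longrightarrow>
     ap ar R enum (Fun f ts) (Fun (Orig g) (map Var xs @ replicate (mcount enum g) (hconst Bot)))"
| ap_arg: "i < length ts \<Longrightarrow> ap ar R enum (ts ! i) u \<Longrightarrow> length xs1 = i \<Longrightarrow>
     length xs1 + 1 + length xs2 = length ts \<Longrightarrow>
     ap ar R enum (Fun f ts) (Fun (Orig f) (map Var xs1 @ u # map Var xs2))"

text \<open>ins xs i us = <x_1..x_m>[u_1..u_j]_i (with i counted from 1).\<close>
definition ins :: "'v list \<Rightarrow> nat \<Rightarrow> ('f hsym, 'v) term list \<Rightarrow> ('f hsym, 'v) term list" where
  "ins xs i us = map Var (take (i - 1) xs) @ us @ map Var (drop i xs)"

definition rule_vars :: "('f, 'v) crule \<Rightarrow> 'v set" where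
  "rule_vars \<rho> = vars (fst \<rho>) \<union> vars (fst (snd \<rho>)) \<union>
     (\<Union>(a, b) \<in> set (snd (snd \<rho>)). vars a \<union> vars b)"

text \<open>The unconditional rules Xi(R); all variable choices satisfying the freshness
  requirements are included (this yields the same rewrite relation as any single choice).\<close>
inductive_set Xi :: "('f \<Rightarrow> nat) \<Rightarrow> ('f, 'v) crule set \<Rightarrow> ('f \<Rightarrow> ('f, 'v) crule list) \<Rightarrow>
    (('f hsym, 'v) term \<times> ('f hsym, 'v) term) set"
  for ar R enum where
  xi1: "1 \<le> i \<Longrightarrow> i \<le> mcount enum f \<Longrightarrow> enum f ! (i - 1) = (Fun f ls, r, cs) \<Longrightarrow>
     distinct xs \<Longrightarrow> length xs = mcount enum f \<Longrightarrow> set xs \<inter> rule_vars (Fun f ls, r, cs) = {} \<Longrightarrow>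
     cs = [] \<Longrightarrow>
     (Fun (Orig f) (map emb ls @ ins xs i [hconst Top]), xi enum Top r) \<in> Xi ar R enum"
| xi2: "1 \<le> i \<Longrightarrow> i \<le> mcount enum f \<Longrightarrow> enum f ! (i - 1) = (Fun f ls, r, cs) \<Longrightarrow>
     distinct xs \<Longrightarrow> length xs = mcount enum f \<Longrightarrow> set xs \<inter> rule_vars (Fun f ls, r, cs) = {} \<Longrightarrow>
     cs \<noteq> [] \<Longrightarrow>
     (Fun (Orig f) (map emb ls @ ins xs i [hconst Top]),
      Fun (Aux f i 1) (map emb ls @ ins xs i [xi enum Top (fst (cs ! 0))])) \<in> Xi ar R enum"
| xi3: "1 \<le> i \<Longrightarrow> i \<le> mcount enum f \<Longrightarrow> enum f ! (i - 1) = (Fun f ls, r, cs) \<Longrightarrow>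
     distinct xs \<Longrightarrow> length xs = mcount enum f \<Longrightarrow> set xs \<inter> rule_vars (Fun f ls, r, cs) = {} \<Longrightarrow>
     cs \<noteq> [] \<Longrightarrow>
     (Fun (Aux f i (length cs)) (map emb ls @ ins xs i (map (emb \<circ> snd) cs)),
      xi enum Top r) \<in> Xi ar R enum"
| xi4: "1 \<le> i \<Longrightarrow> i \<le> mcount enum f \<Longrightarrow> enum f ! (i - 1) = (Fun f ls, r, cs) \<Longrightarrow>
     distinct xs \<Longrightarrow> length xs = mcount enum f \<Longrightarrow> set xs \<inter> rule_vars (Fun f ls, r, cs) = {} \<Longrightarrow>
     1 \<le> j \<Longrightarrow> j < length cs \<Longrightarrow>
     (Fun (Aux f i j) (map emb ls @ ins xs i (map (emb \<circ> snd) (take j cs))),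
      Fun (Aux f i (Suc j)) (map emb ls @
         ins xs i (map (emb \<circ> snd) (take j cs) @ [xi enum Top (fst (cs ! j))]))) \<in> Xi ar R enum"
| xi5: "1 \<le> i \<Longrightarrow> i \<le> mcount enum f \<Longrightarrow> enum f ! (i - 1) = (Fun f ls, r, cs) \<Longrightarrow>
     distinct xs \<Longrightarrow> length xs = mcount enum f \<Longrightarrow> set xs \<inter> rule_vars (Fun f ls, r, cs) = {} \<Longrightarrow>
     1 \<le> j \<Longrightarrow> j \<le> length cs \<Longrightarrow>
     ap ar R enum (snd (cs ! (j - 1))) v \<Longrightarrow> linear v \<Longrightarrow>
     vars v \<inter> (set xs \<union> rule_vars (Fun f ls, r, cs)) = {} \<Longrightarrow>
     (Fun (Aux f i j) (map emb ls @ ins xs i (map (emb \<circ> snd) (take (j - 1) cs) @ [v])),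
      Fun (Orig f) (map emb ls @ ins xs i [hconst Bot])) \<in> Xi ar R enum"
| xi6: "1 \<le> i \<Longrightarrow> i \<le> mcount enum f \<Longrightarrow> enum f ! (i - 1) = (Fun f ls, r, cs) \<Longrightarrow>
     distinct xs \<Longrightarrow> length xs = mcount enum f \<Longrightarrow> set xs \<inter> rule_vars (Fun f ls, r, cs) = {} \<Longrightarrow>
     distinct ys \<Longrightarrow> length ys = length ls \<Longrightarrow> set ys \<inter> set xs = {} \<Longrightarrow>
     1 \<le> j \<Longrightarrow> j \<le> length ls \<Longrightarrow>
     ap ar R enum (ls ! (j - 1)) v \<Longrightarrow> linear v \<Longrightarrow>
     vars v \<inter> (set xs \<union> set ys) = {} \<Longrightarrow>
     (Fun (Orig f) (ins ys j [v] @ ins xs i [hconst Top]),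
      Fun (Orig f) (ins ys j [v] @ ins xs i [hconst Bot])) \<in> Xi ar R enum"

definition cs_step :: "('f hsym \<Rightarrow> nat set) \<Rightarrow> (('f hsym, 'v) term \<times> ('f hsym, 'v) term) set \<Rightarrow>
    ('f hsym, 'v) term \<Rightarrow> ('f hsym, 'v) term \<Rightarrow> bool" where
  "cs_step \<mu> S s t \<longleftrightarrow> (\<exists>C l r \<sigma>. (l, r) \<in> S \<and> active_ctxt \<mu> C \<and>
      s = plug C (subst \<sigma> l) \<and> t = plug C (subst \<sigma> r))"

definition terminating_on :: "('a \<Rightarrow> 'a \<Rightarrow> bool) \<Rightarrow> 'a set \<Rightarrow> bool" where
  "terminating_on rel A \<longleftrightarrow> (\<forall>s \<in> A. \<not> (\<exists>u. u 0 = s \<and> (\<forall>i. rel (u i) (u (Suc i)))))"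

fun zeta :: "('f \<Rightarrow> ('f, 'v) crule list) \<Rightarrow> (('f, 'v) gsym, 'v) term \<Rightarrow> ('f hsym, 'v) term" where
  "zeta enum (Var x) = Var x"
| "zeta enum (Fun (GCon c) ts) = Fun (Orig c) (map (zeta enum) ts)"
| "zeta enum (Fun (GLab f S) ts) = Fun (Orig f) (map (zeta enum) ts @
      map (\<lambda>\<rho>. if \<rho> \<in> S then hconst Top else hconst Bot) (enum f))"

end

theory Submission
  imports Defs
begin

lemma vars_Var[simp]: "vars (Var x) = {x}" by (simp add: vars_def)
lemma vars_Fun[simp]: "vars (Fun f ts) = (\<Union>t\<in>set ts. vars t)" by (auto simp: vars_def)

lemma subst_cong: "(\<And>x. x \<in> vars t \<Longrightarrow> \<sigma> x = \<tau> x) \<Longrightarrow> subst \<sigma> t = subst \<tau> t"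
  by (induction t) auto
lemma subst_eq_vars: "subst \<sigma> t = subst \<tau> t \<Longrightarrow> x \<in> vars t \<Longrightarrow> \<sigma> x = \<tau> x"
  by (induction t) auto

fun ccomp :: "('f,'v) ctxt \<Rightarrow> ('f,'v) ctxt \<Rightarrow> ('f,'v) ctxt" where
  "ccomp Hole D = D" | "ccomp (More f ss C ts) D = More f ss (ccomp C D) ts"
lemma plug_comp[simp]: "plug (ccomp C D) t = plug C (plug D t)" by (induction C) auto
lemma active_comp: "active_ctxt mu C \<Longrightarrow> active_ctxt mu D \<Longrightarrow> active_ctxt mu (ccomp C D)"
  by (induction C) auto

lemma rstep_ctxt: "rstep R s t \<Longrightarrow> rstep R (plug C s) (plug C t)"
  by (erule rstep.cases) (metis plug_comp rstep.intros)
lemma rsteps_ctxt: "(rstep R)\<^sup>*\<^sup>* s t \<Longrightarrow> (rstep R)\<^sup>*\<^sup>* (plug C s) (plug C t)"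
  by (induction rule: rtranclp_induct) (auto intro: rtranclp.rtrancl_into_rtrancl rstep_ctxt)
lemma sqsup_ctxt: "sqsup R s t \<Longrightarrow> sqsup R (plug C s) t"
  unfolding sqsup_def by (metis plug_comp)

lemma acc_no_chain: "x \<in> Wellfounded.acc r \<Longrightarrow> \<forall>f. f 0 = x \<longrightarrow> \<not> (\<forall>i. (f (Suc i), f i) \<in> r)"
proof (induction rule: acc_induct_rule)
  case (1 x)
  show ?case
  proof (intro allI impI notI)
    fix f assume f0: "f 0 = x" and ch: "\<forall>i. (f (Suc i), f i) \<in> r"
    have f1: "(f 1, x) \<in> r" using ch f0 by (metis One_nat_def)
    have "\<not> (\<forall>i. ((\<lambda>n. f (Suc n)) (Suc i), (\<lambda>n. f (Suc n)) i) \<in> r)"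
      using 1(2)[OF f1, THEN spec, of "\<lambda>n. f (Suc n)"] by simp
    with ch show False by simp
  qed
qed

lemma chain_not_acc: assumes x: "x \<notin> Wellfounded.acc r" shows "\<exists>f. f 0 = x \<and> (\<forall>i. (f (Suc i), f i) \<in> r)"
proof -
  define g where "g = (\<lambda>y. SOME z. (z,y) \<in> r \<and> z \<notin> Wellfounded.acc r)"
  have g: "(g y, y) \<in> r \<and> g y \<notin> Wellfounded.acc r" if "y \<notin> Wellfounded.acc r" for y
    unfolding g_def by (rule someI_ex) (meson not_acc_down that)
  define f where "f = (\<lambda>n. (g ^^ n) x)"
  have fn: "f n \<notin> Wellfounded.acc r" for n by (induction n) (simp_all add: f_def x g)
  have "\<forall>i. (f (Suc i), f i) \<in> r" using g[OF fn] by (simp add: f_def)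
  then show ?thesis by (intro exI[of _ f]) (simp add: f_def)
qed

lemma acc_trancl: "x \<in> Wellfounded.acc r \<Longrightarrow> x \<in> Wellfounded.acc (r\<^sup>+)"
proof (induction rule: acc_induct_rule)
  case (1 x)
  show ?case
  proof (rule accI)
    fix y assume "(y, x) \<in> r\<^sup>+"
    then show "y \<in> Wellfounded.acc (r\<^sup>+)"
    proof (cases rule: tranclE)
      case base then show ?thesis using 1 by blast
    next
      case (step z) then show ?thesis using 1 acc_downward by metis
    qed
  qed
qed


fun phi :: "('f \<Rightarrow> nat) \<Rightarrow> ('f hsym, 'v) term \<Rightarrow> ('f, 'v) term" where
  "phi ar (Var x) = Var x"
| "phi ar (Fun (Orig f) ts) = Fun f (take (ar f) (map (phi ar) ts))"
| "phi ar (Fun (Aux f i j) ts) = Fun f (take (ar f) (map (phi ar) ts))"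
| "phi ar (Fun Bot ts) = Fun undefined []"
| "phi ar (Fun Top ts) = Fun undefined []"

lemma phi_subst: "phi ar (subst \<sigma> t) = subst (phi ar \<circ> \<sigma>) (phi ar t)"
  by (induction ar t rule: phi.induct) (auto simp: take_map dest: in_set_takeD)

lemma phi_emb: "wf_term ar u \<Longrightarrow> phi ar (emb u) = u"
proof (induction u)
  case (Fun f ts)
  then have "map (phi ar \<circ> emb) ts = ts" by (simp add: map_idI)
  with Fun show ?case by simp
qed simp

lemma phi_xi: "wf_term ar u \<Longrightarrow> phi ar (xi enum st u) = u"
proof (induction u)
  case (Fun f ts)
  then have "map (phi ar \<circ> xi enum st) ts = ts" by (simp add: map_idI)
  with Fun show ?case by simp
qed simp

lemma vars_emb[simp]: "vars (emb u) = vars u"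
  by (induction u) auto
lemma vars_xi[simp]: "vars (xi enum st u) = vars u"
  by (induction u) auto

fun noaux :: "('f hsym, 'v) term \<Rightarrow> bool" where
  "noaux (Var x) = True"
| "noaux (Fun g ts) = ((\<forall>t\<in>set ts. noaux t) \<and> (case g of Aux _ _ _ \<Rightarrow> False | _ \<Rightarrow> True))"

lemma noaux_emb[simp]: "noaux (emb u)" by (induction u) auto
lemma noaux_xi[simp]: "st = Top \<or> st = Bot \<Longrightarrow> noaux (xi enum st u)" by (induction u) auto

definition good :: "('f \<Rightarrow> nat) \<Rightarrow> ('f, 'v) crule set \<Rightarrow> ('f \<Rightarrow> ('f, 'v) crule list) \<Rightarrow>
   'f \<Rightarrow> nat \<Rightarrow> nat \<Rightarrow> ('f hsym, 'v) term list \<Rightarrow> bool" where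
 "good ar R enum f i j ts \<longleftrightarrow> (\<exists>ls r cs \<sigma> pre c post. 1 \<le> i \<and> i \<le> mcount enum f \<and>
    enum f ! (i-1) = (Fun f ls, r, cs) \<and> 1 \<le> j \<and> j \<le> length cs \<and>
    length pre = i - 1 \<and> length post = mcount enum f - i \<and>
    ts = map (subst \<sigma> \<circ> emb) ls @ pre @ map (subst \<sigma> \<circ> emb \<circ> snd) (take (j-1) cs) @ c # post \<and>
    (\<forall>k < j-1. (rstep R)\<^sup>*\<^sup>* (subst (phi ar \<circ> \<sigma>) (fst (cs!k))) (subst (phi ar \<circ> \<sigma>) (snd (cs!k)))) \<and>
    (rstep R)\<^sup>*\<^sup>* (subst (phi ar \<circ> \<sigma>) (fst (cs!(j-1)))) (phi ar c))"

fun hinv :: "('f \<Rightarrow> nat) \<Rightarrow> ('f, 'v) crule set \<Rightarrow> ('f \<Rightarrow> ('f, 'v) crule list) \<Rightarrow>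
   ('f hsym, 'v) term \<Rightarrow> bool" where
  "hinv ar R enum (Var x) = True"
| "hinv ar R enum (Fun g ts) = ((\<forall>t\<in>set ts. hinv ar R enum t) \<and>
     (case g of Aux f i j \<Rightarrow> good ar R enum f i j ts | _ \<Rightarrow> True))"

lemma hinv_subst_noaux: "noaux t \<Longrightarrow> (\<forall>x\<in>vars t. hinv ar R enum (\<sigma> x)) \<Longrightarrow> hinv ar R enum (subst \<sigma> t)"
proof (induction t)
  case (Fun g ts) then show ?case by (cases g) auto
qed simp

lemma hinv_subst_var: "hinv ar R enum (subst \<sigma> t) \<Longrightarrow> x \<in> vars t \<Longrightarrow> hinv ar R enum (\<sigma> x)"
  by (induction t) auto

definition ntop :: "('f hsym, 'v) term list \<Rightarrow> nat" where
  "ntop ts = length (filter (\<lambda>t. t = hconst Top) ts)"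

lemma ntop_simps[simp]: "ntop [] = 0" "ntop (xs @ ys) = ntop xs + ntop ys"
  "ntop (hconst Top # xs) = Suc (ntop xs)" "ntop (hconst Bot # xs) = ntop xs"
  by (auto simp: ntop_def)

fun mur :: "('f \<Rightarrow> nat) \<Rightarrow> ('f \<Rightarrow> ('f, 'v) crule list) \<Rightarrow> ('f hsym, 'v) term \<Rightarrow> nat \<times> nat" where
  "mur ar enum (Fun (Orig f) ts) = (ntop (drop (ar f) ts), 0)"
| "mur ar enum (Fun (Aux f i j) ts) = (ntop (take (i-1) (drop (ar f) ts)) + ntop (drop (ar f + (i-1) + j) ts),
      Suc (length (snd (snd (enum f ! (i-1)))) - j))"
| "mur ar enum _ = (0,0)"

fun act :: "('f \<Rightarrow> nat) \<Rightarrow> ('f hsym, 'v) term \<Rightarrow> ('f hsym, 'v) term list" where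
  "act ar (Fun (Orig f) ts) = take (ar f) ts"
| "act ar (Fun (Aux f i j) ts) = [ts ! (ar f + i + j - 2)]"
| "act ar _ = []"

locale cset =
  fixes ar :: "'f \<Rightarrow> nat" and R :: "('f, 'v) crule set" and enum :: "'f \<Rightarrow> ('f, 'v) crule list"
  assumes inf: "infinite (UNIV :: 'v set)" and str: "strong_cctrs ar R" and en: "enumeration R enum"
begin

lemma rule_R: "\<rho> \<in> R \<Longrightarrow> \<exists>f ls r cs. \<rho> = (Fun f ls, r, cs) \<and>
      wf_term ar (Fun f ls) \<and> wf_term ar r \<and>
      (\<forall>(a, b) \<in> set cs. wf_term ar a \<and> wf_term ar b) \<and>
      (\<forall>l \<in> set ls. constr_term R l) \<and>
      (\<forall>(a, b) \<in> set cs. constr_term R b) \<and>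
      vars r \<subseteq> vars (Fun f ls) \<union> (\<Union>b \<in> set (map snd cs). vars b) \<and>
      (\<forall>i < length cs. vars (fst (cs ! i)) \<subseteq>
          vars (Fun f ls) \<union> (\<Union>b \<in> set (take i (map snd cs)). vars b))"
  using str unfolding strong_cctrs_def cctrs_def by blast

lemma enum_in: "1 \<le> i \<Longrightarrow> i \<le> mcount enum f \<Longrightarrow> enum f ! (i-1) = \<rho> \<Longrightarrow> \<rho> \<in> R \<and> root (fst \<rho>) = Some f"
proof -
  assume "1 \<le> i" "i \<le> mcount enum f" "enum f ! (i-1) = \<rho>"
  then have "\<rho> \<in> set (enum f)" unfolding mcount_def by (metis One_nat_def Suc_le_eq diff_Suc_less nth_mem order_less_le_trans)
  then show ?thesis using en unfolding enumeration_def rules_of_def by auto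
qed

lemma enum_rule:
  assumes "1 \<le> i" "i \<le> mcount enum f" "enum f ! (i-1) = (Fun g ls, r, cs)"
  shows "(Fun g ls, r, cs) \<in> R" "g = f" "length ls = ar f" "\<forall>l\<in>set ls. wf_term ar l \<and> constr_term R l"
    "wf_term ar r" "\<forall>(a, b) \<in> set cs. wf_term ar a \<and> wf_term ar b \<and> constr_term R b"
    "vars r \<subseteq> (\<Union>l\<in>set ls. vars l) \<union> (\<Union>b \<in> set (map snd cs). vars b)"
    "\<forall>k < length cs. vars (fst (cs ! k)) \<subseteq> (\<Union>l\<in>set ls. vars l) \<union> (\<Union>b \<in> set (take k (map snd cs)). vars b)"
proof -
  from enum_in[OF assms] have inR: "(Fun g ls, r, cs) \<in> R" and gf: "g = f" by auto
  from rule_R[OF inR] show "(Fun g ls, r, cs) \<in> R" "g = f" "length ls = ar f" "\<forall>l\<in>set ls. wf_term ar l \<and> constr_term R l"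
    "wf_term ar r" "\<forall>(a, b) \<in> set cs. wf_term ar a \<and> wf_term ar b \<and> constr_term R b"
    "vars r \<subseteq> (\<Union>l\<in>set ls. vars l) \<union> (\<Union>b \<in> set (map snd cs). vars b)"
    "\<forall>k < length cs. vars (fst (cs ! k)) \<subseteq> (\<Union>l\<in>set ls. vars l) \<union> (\<Union>b \<in> set (take k (map snd cs)). vars b)"
    using inR gf by auto
qed

lemma mcount_constr: "\<not> defined R c \<Longrightarrow> mcount enum c = 0"
proof -
  assume "\<not> defined R c"
  have "set (enum c) = rules_of R c" using en by (simp add: enumeration_def)
  moreover have "rules_of R c = {}" using \<open>\<not> defined R c\<close> by (auto simp: rules_of_def defined_def)
  ultimately have "set (enum c) = {}" by simp
  then show ?thesis by (simp add: mcount_def)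
qed

lemma xi_constr: "constr_term R u \<Longrightarrow> xi enum st u = emb u"
proof (induction u)
  case (Fun f ts)
  then have "\<not> defined R f" "\<forall>t\<in>set ts. constr_term R t" by (auto simp: constr_term_def)
  with Fun show ?case by (simp add: mcount_constr)
qed simp

end

lemma ins_map: "map (subst \<sigma>) (ins xs i us) = map \<sigma> (take (i-1) xs) @ map (subst \<sigma>) us @ map \<sigma> (drop i xs)"
  by (simp add: ins_def)

lemma hinv_noaux_args: "\<forall>t\<in>set args. noaux t \<Longrightarrow> \<forall>x\<in>(\<Union>t\<in>set args. vars t). hinv ar R enum (\<sigma> x) \<Longrightarrow>
   \<forall>t\<in>set (map (subst \<sigma>) args). hinv ar R enum t"
  using hinv_subst_noaux by fastforce

lemma ap_noaux: "ap ar R enum u v \<Longrightarrow> noaux v"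
  by (induction rule: ap.induct) (auto dest: in_set_takeD in_set_dropD simp: nth_append)

lemma phi_OA: "length ls = ar f \<Longrightarrow> \<forall>l\<in>set ls. wf_term ar l \<Longrightarrow> g = Orig f \<or> g = Aux f i j \<Longrightarrow>
   phi ar (Fun g (map emb ls @ rest)) = Fun f ls"
proof -
  assume a: "length ls = ar f" "\<forall>l\<in>set ls. wf_term ar l" "g = Orig f \<or> g = Aux f i j"
  have "map (phi ar \<circ> emb) ls = ls" using a(2) by (simp add: map_idI phi_emb)
  then show ?thesis using a by auto
qed

lemma mur_aux: "length ls = ar f \<Longrightarrow> length xs = m \<Longrightarrow> 1 \<le> i \<Longrightarrow> i \<le> m \<Longrightarrow> length L = j \<Longrightarrow>
  mur ar enum (Fun (Aux f i j) (map (subst \<sigma>) (map emb ls @ ins xs i L))) =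
   (ntop (map \<sigma> (take (i-1) xs)) + ntop (map \<sigma> (drop i xs)), Suc (length (snd (snd (enum f ! (i-1)))) - j))"
  by (simp add: ins_map)

lemma mur_orig: "length P = ar f \<Longrightarrow> length xs = m \<Longrightarrow> 1 \<le> i \<Longrightarrow> i \<le> m \<Longrightarrow>
  mur ar enum (Fun (Orig f) (map (subst \<sigma>) (P @ ins xs i [hconst c]))) =
   (ntop (map \<sigma> (take (i-1) xs)) + ntop [hconst c] + ntop (map \<sigma> (drop i xs)), 0)"
  by (simp add: ins_map ntop_def)

context cset begin

lemma good_match:
  assumes g: "good ar R enum f i j (map (subst \<sigma>) (map emb ls @ ins xs i (map (emb \<circ> snd) (take (j-1) cs) @ [u])))"
    and e: "enum f ! (i-1) = (Fun f ls, r, cs)" and lx: "length xs = mcount enum f" and i: "1 \<le> i" "i \<le> mcount enum f"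
  shows "(\<forall>k<j-1. (rstep R)\<^sup>*\<^sup>* (subst (phi ar \<circ> \<sigma>) (fst (cs!k))) (subst (phi ar \<circ> \<sigma>) (snd (cs!k))))
     \<and> (rstep R)\<^sup>*\<^sup>* (subst (phi ar \<circ> \<sigma>) (fst (cs!(j-1)))) (phi ar (subst \<sigma> u))"
proof -
  from g obtain ls' r' cs' \<sigma>' pre c post where
    e': "enum f ! (i-1) = (Fun f ls', r', cs')" and j: "1 \<le> j" "j \<le> length cs'" and
    lp: "length pre = i - 1" and
    eq: "map (subst \<sigma>) (map emb ls @ ins xs i (map (emb \<circ> snd) (take (j-1) cs) @ [u])) =
      map (subst \<sigma>' \<circ> emb) ls' @ pre @ map (subst \<sigma>' \<circ> emb \<circ> snd) (take (j-1) cs') @ c # post" and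
    cond: "\<forall>k < j-1. (rstep R)\<^sup>*\<^sup>* (subst (phi ar \<circ> \<sigma>') (fst (cs'!k))) (subst (phi ar \<circ> \<sigma>') (snd (cs'!k)))" and
    last: "(rstep R)\<^sup>*\<^sup>* (subst (phi ar \<circ> \<sigma>') (fst (cs'!(j-1)))) (phi ar c)"
    unfolding good_def by blast
  from e e' have [simp]: "ls' = ls" "r' = r" "cs' = cs" by auto
  have eq2: "map (subst \<sigma>' \<circ> emb) ls @ pre @ map (subst \<sigma>' \<circ> emb \<circ> snd) (take (j-1) cs) @ c # post =
      map (subst \<sigma> \<circ> emb) ls @ map \<sigma> (take (i-1) xs) @ map (subst \<sigma> \<circ> emb \<circ> snd) (take (j-1) cs) @ subst \<sigma> u # map \<sigma> (drop i xs)"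
    using eq[symmetric] by (simp add: ins_map)
  have ltx: "length (map \<sigma> (take (i-1) xs)) = length pre" using lp lx i by simp
  from eq2 have E1: "map (subst \<sigma>' \<circ> emb) ls = map (subst \<sigma> \<circ> emb) ls" and
    eq3: "pre @ map (subst \<sigma>' \<circ> emb \<circ> snd) (take (j-1) cs) @ c # post =
      map \<sigma> (take (i-1) xs) @ map (subst \<sigma> \<circ> emb \<circ> snd) (take (j-1) cs) @ subst \<sigma> u # map \<sigma> (drop i xs)"
    by (simp_all add: append_eq_append_conv)
  from eq3 ltx have eq4: "map (subst \<sigma>' \<circ> emb \<circ> snd) (take (j-1) cs) @ c # post =
      map (subst \<sigma> \<circ> emb \<circ> snd) (take (j-1) cs) @ subst \<sigma> u # map \<sigma> (drop i xs)"
    by (simp add: append_eq_append_conv)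
  then have E2: "map (subst \<sigma>' \<circ> emb \<circ> snd) (take (j-1) cs) = map (subst \<sigma> \<circ> emb \<circ> snd) (take (j-1) cs)"
    and Ec: "c = subst \<sigma> u"
    by (simp_all add: append_eq_append_conv)
  define V where "V = (\<Union>l\<in>set ls. vars l) \<union> (\<Union>p\<in>set (take (j-1) cs). vars (snd p))"
  have agree: "\<sigma>' x = \<sigma> x" if "x \<in> V" for x
  proof -
    from that consider (a) l where "l \<in> set ls" "x \<in> vars l" | (b) p where "p \<in> set (take (j-1) cs)" "x \<in> vars (snd p)"
      unfolding V_def by blast
    then show ?thesis
    proof cases
      case a
      then have "subst \<sigma>' (emb l) = subst \<sigma> (emb l)" using E1 by (simp add: map_eq_conv)
      then show ?thesis using a subst_eq_vars[of \<sigma>' "emb l" \<sigma> x] by simp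
    next
      case b
      then have "subst \<sigma>' (emb (snd p)) = subst \<sigma> (emb (snd p))" using E2 by (simp add: map_eq_conv)
      then show ?thesis using b subst_eq_vars[of \<sigma>' "emb (snd p)" \<sigma> x] by simp
    qed
  qed
  have varsa: "vars (fst (cs ! k)) \<subseteq> V" if "k \<le> j - 1" for k
  proof -
    have "k < length cs" using that j by simp
    then have "vars (fst (cs ! k)) \<subseteq> (\<Union>l\<in>set ls. vars l) \<union> (\<Union>b \<in> set (take k (map snd cs)). vars b)"
      using enum_rule(8)[OF i e] by blast
    moreover have "set (take k (map snd cs)) \<subseteq> snd ` set (take (j-1) cs)"
    proof -
      have "set (take k (map snd cs)) = snd ` set (take k cs)" by (simp add: take_map)
      also have "\<dots> \<subseteq> snd ` set (take (j-1) cs)" using that by (intro image_mono set_take_subset_set_take)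
      finally show ?thesis .
    qed
    then have "vars ` set (take k (map snd cs)) \<subseteq> vars ` snd ` set (take (j-1) cs)" by (rule image_mono)
    from Union_mono[OF this]
    have "(\<Union>b\<in>set (take k (map snd cs)). vars b) \<subseteq> (\<Union>p\<in>set (take (j-1) cs). vars (snd p))"
      by (simp add: image_image)
    ultimately show ?thesis unfolding V_def by (meson Un_mono order_trans order_refl)
  qed
  have varsb: "vars (snd (cs ! k)) \<subseteq> V" if "k < j - 1" for k
  proof -
    have "cs ! k = take (j-1) cs ! k" using that by simp
    moreover have "k < length (take (j-1) cs)" using that j by simp
    ultimately have "cs ! k \<in> set (take (j-1) cs)" by (metis nth_mem)
    then show ?thesis unfolding V_def by blast
  qed
  have sa: "subst (phi ar \<circ> \<sigma>') t = subst (phi ar \<circ> \<sigma>) t" if "vars t \<subseteq> V" for t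
    using that agree by (intro subst_cong) auto
  show ?thesis
  proof
    show "\<forall>k<j-1. (rstep R)\<^sup>*\<^sup>* (subst (phi ar \<circ> \<sigma>) (fst (cs!k))) (subst (phi ar \<circ> \<sigma>) (snd (cs!k)))"
      using cond sa varsa varsb by (metis less_imp_le_nat \<open>cs' = cs\<close>)
    show "(rstep R)\<^sup>*\<^sup>* (subst (phi ar \<circ> \<sigma>) (fst (cs!(j-1)))) (phi ar (subst \<sigma> u))"
      using last sa[OF varsa[OF order_refl]] Ec by simp
  qed
qed

end

context cset begin

lemma phi_orig: "length ls = ar f \<Longrightarrow> \<forall>l\<in>set ls. wf_term ar l \<Longrightarrow> phi ar (Fun (Orig f) (map emb ls @ rest)) = Fun f ls"
  by (rule phi_OA) auto
lemma phi_auxs: "length ls = ar f \<Longrightarrow> \<forall>l\<in>set ls. wf_term ar l \<Longrightarrow> phi ar (Fun (Aux f i j) (map emb ls @ rest)) = Fun f ls"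
  by (rule phi_OA) auto

abbreviation lexr :: "((nat \<times> nat) \<times> (nat \<times> nat)) set" where "lexr \<equiv> less_than <*lex*> less_than"

lemma rstep_root: "(l, r, cs) \<in> R \<Longrightarrow> \<forall>j<length cs. (rstep R)\<^sup>*\<^sup>* (subst \<sigma> (fst (cs ! j))) (subst \<sigma> (snd (cs ! j)))
   \<Longrightarrow> rstep R (subst \<sigma> l) (subst \<sigma> r)"
  using rstep.intros[of l r cs R \<sigma> Hole] by simp

lemma root_step:
  assumes xi: "(lhs, rhs) \<in> Xi ar R enum" and h: "hinv ar R enum (subst \<sigma> lhs)"
  shows "hinv ar R enum (subst \<sigma> rhs) \<and>
    ((phi ar (subst \<sigma> rhs) = phi ar (subst \<sigma> lhs) \<and> (mur ar enum (subst \<sigma> rhs), mur ar enum (subst \<sigma> lhs)) \<in> lexr)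
     \<or> rstep R (phi ar (subst \<sigma> lhs)) (phi ar (subst \<sigma> rhs)))"
proof -
  have hv: "\<And>x. x \<in> vars lhs \<Longrightarrow> hinv ar R enum (\<sigma> x)" by (rule hinv_subst_var[OF h])
  define \<theta> where "\<theta> = phi ar \<circ> \<sigma>"
  have phs: "phi ar (subst \<sigma> t) = subst \<theta> (phi ar t)" for t by (simp add: phi_subst \<theta>_def)
  have hnoaux: "hinv ar R enum (subst \<sigma> rhs)" if "noaux rhs" "vars rhs \<subseteq> vars lhs"
    using that hv by (intro hinv_subst_noaux) auto
  from xi show ?thesis
  proof cases
    case (xi1 i f ls r cs xs)
    note E = enum_rule[OF xi1(3,4,5)]
    have wls: "\<forall>l\<in>set ls. wf_term ar l" using E(4) by blast
    have vr: "vars r \<subseteq> vars lhs" using E(7) xi1 by auto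
    have "hinv ar R enum (subst \<sigma> rhs)" using xi1 vr by (intro hnoaux) auto
    moreover have "phi ar (subst \<sigma> lhs) = subst \<theta> (Fun f ls)" by (simp only: xi1(1) phs phi_orig[OF E(3) wls] phi_auxs[OF E(3) wls])
    moreover have "phi ar (subst \<sigma> rhs) = subst \<theta> r" by (simp only: xi1(2) phs phi_xi[OF E(5)])
    moreover have "rstep R (subst \<theta> (Fun f ls)) (subst \<theta> r)" using rstep_root[OF E(1)] xi1 by simp
    ultimately show ?thesis by simp
  next
    case (xi2 i f ls r cs xs)
    note E = enum_rule[OF xi2(3,4,5)]
    have wls: "\<forall>l\<in>set ls. wf_term ar l" using E(4) by blast
    have c0: "cs ! 0 \<in> set cs" using xi2 by simp
    have wa: "wf_term ar (fst (cs ! 0))" using E(6) c0 by auto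
    have "0 < length cs" using xi2 by simp
    from E(8)[rule_format, OF this] have va: "vars (fst (cs ! 0)) \<subseteq> (\<Union>l\<in>set ls. vars l)" by simp
    have args: "\<forall>t\<in>set (map (subst \<sigma>) (map emb ls @ ins xs i [xi enum Top (fst (cs ! 0))])). hinv ar R enum t"
      using va xi2 hv by (intro hinv_noaux_args) (auto simp: ins_def dest: in_set_takeD in_set_dropD)
    have gd: "good ar R enum f i 1 (map (subst \<sigma>) (map emb ls @ ins xs i [xi enum Top (fst (cs ! 0))]))"
      unfolding good_def
      apply (rule exI[of _ ls], rule exI[of _ r], rule exI[of _ cs], rule exI[of _ \<sigma>])
      apply (rule exI[of _ "map \<sigma> (take (i-1) xs)"], rule exI[of _ "subst \<sigma> (xi enum Top (fst (cs ! 0)))"])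
      apply (rule exI[of _ "map \<sigma> (drop i xs)"])
      using xi2 wa by (simp add: ins_map phs phi_xi \<theta>_def Suc_leI)
    have "hinv ar R enum (subst \<sigma> rhs)" using xi2 args gd by simp
    moreover have "phi ar (subst \<sigma> lhs) = subst \<theta> (Fun f ls)" by (simp only: xi2(1) phs phi_orig[OF E(3) wls] phi_auxs[OF E(3) wls])
    moreover have "phi ar (subst \<sigma> rhs) = subst \<theta> (Fun f ls)" by (simp only: xi2(2) phs phi_orig[OF E(3) wls] phi_auxs[OF E(3) wls])
    moreover have "(mur ar enum (subst \<sigma> rhs), mur ar enum (subst \<sigma> lhs)) \<in> lexr"
      using xi2 E mur_aux[of ls ar f xs "mcount enum f" i "[xi enum Top (fst (cs ! 0))]" 1 enum \<sigma>]
        mur_orig[of "map emb ls" ar f xs "mcount enum f" i enum \<sigma> Top] by simp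
    ultimately show ?thesis by simp
  next
    case (xi3 i f ls r cs xs)
    note E = enum_rule[OF xi3(3,4,5)]
    have wls: "\<forall>l\<in>set ls. wf_term ar l" using E(4) by blast
    have csl: "map (emb \<circ> snd) cs = map (emb \<circ> snd) (take (length cs - 1) cs) @ [emb (snd (cs ! (length cs - 1)))]"
    proof -
      have "cs = take (length cs - 1) cs @ [cs ! (length cs - 1)]"
        using xi3 append_butlast_last_id[of cs] by (simp add: butlast_conv_take last_conv_nth)
      then have "map (emb \<circ> snd) cs = map (emb \<circ> snd) (take (length cs - 1) cs @ [cs ! (length cs - 1)])"
        by (rule arg_cong)
      then show ?thesis by simp
    qed
    have gm: "good ar R enum f i (length cs) (map (subst \<sigma>) (map emb ls @ ins xs i (map (emb \<circ> snd) (take (length cs - 1) cs) @ [emb (snd (cs ! (length cs - 1)))])))"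
      using h xi3 csl by simp
    note G = good_match[OF gm xi3(5,7,3,4)]
    have lc: "cs ! (length cs - 1) \<in> set cs" using xi3 by simp
    have wb: "wf_term ar (snd (cs ! (length cs - 1)))" using E(6) lc by auto
    have conds: "\<forall>k<length cs. (rstep R)\<^sup>*\<^sup>* (subst \<theta> (fst (cs!k))) (subst \<theta> (snd (cs!k)))"
    proof (intro allI impI)
      fix k assume k: "k < length cs"
      show "(rstep R)\<^sup>*\<^sup>* (subst \<theta> (fst (cs!k))) (subst \<theta> (snd (cs!k)))"
      proof (cases "k < length cs - 1")
        case True then show ?thesis using G \<theta>_def by simp
      next
        case False then have "k = length cs - 1" using k by simp
        then show ?thesis using G phi_emb[OF wb] \<theta>_def by (simp add: phi_subst)
      qed
    qed
    have vr: "vars r \<subseteq> vars lhs" using E(7) xi3 by (auto simp: ins_def)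
    have "hinv ar R enum (subst \<sigma> rhs)" using xi3 vr by (intro hnoaux) auto
    moreover have "phi ar (subst \<sigma> lhs) = subst \<theta> (Fun f ls)" by (simp only: xi3(1) phs phi_orig[OF E(3) wls] phi_auxs[OF E(3) wls])
    moreover have "phi ar (subst \<sigma> rhs) = subst \<theta> r" by (simp only: xi3(2) phs phi_xi[OF E(5)])
    moreover have "rstep R (subst \<theta> (Fun f ls)) (subst \<theta> r)" using rstep_root[OF E(1) conds] by simp
    ultimately show ?thesis by simp
  next
    case (xi4 i f ls r cs xs j)
    note E = enum_rule[OF xi4(3,4,5)]
    have wls: "\<forall>l\<in>set ls. wf_term ar l" using E(4) by blast
    have tj: "take j cs = take (j - 1) cs @ [cs ! (j - 1)]"
      using xi4 by (metis Suc_diff_1 less_imp_diff_less order_less_le_trans take_Suc_conv_app_nth zero_less_one)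
    have gm: "good ar R enum f i j (map (subst \<sigma>) (map emb ls @ ins xs i (map (emb \<circ> snd) (take (j - 1) cs) @ [emb (snd (cs ! (j - 1)))])))"
      using h xi4 tj by simp
    note G = good_match[OF gm xi4(5,7,3,4)]
    have lc: "cs ! (j - 1) \<in> set cs" using xi4 by simp
    have wb: "wf_term ar (snd (cs ! (j - 1)))" using E(6) lc by auto
    have conds: "\<forall>k<j. (rstep R)\<^sup>*\<^sup>* (subst \<theta> (fst (cs!k))) (subst \<theta> (snd (cs!k)))"
    proof (intro allI impI)
      fix k assume k: "k < j"
      show "(rstep R)\<^sup>*\<^sup>* (subst \<theta> (fst (cs!k))) (subst \<theta> (snd (cs!k)))"
      proof (cases "k < j - 1")
        case True then show ?thesis using G \<theta>_def by simp
      next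
        case False then have "k = j - 1" using k by simp
        then show ?thesis using G phi_emb[OF wb] \<theta>_def by (simp add: phi_subst)
      qed
    qed
    have cj: "cs ! j \<in> set cs" using xi4 by simp
    have wa: "wf_term ar (fst (cs ! j))" using E(6) cj by auto
    have va: "vars (fst (cs ! j)) \<subseteq> vars lhs"
    proof -
      have "vars (fst (cs ! j)) \<subseteq> (\<Union>l\<in>set ls. vars l) \<union> (\<Union>b \<in> set (take j (map snd cs)). vars b)"
        using E(8) xi4 by auto
      then show ?thesis using xi4 by (auto simp: ins_def take_map)
    qed
    have args: "\<forall>t\<in>set (map (subst \<sigma>) (map emb ls @ ins xs i (map (emb \<circ> snd) (take j cs) @ [xi enum Top (fst (cs ! j))]))). hinv ar R enum t"
    proof (intro hinv_noaux_args)
      show "\<forall>t\<in>set (map emb ls @ ins xs i (map (emb \<circ> snd) (take j cs) @ [xi enum Top (fst (cs ! j))])). noaux t"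
        by (auto simp: ins_def)
      have "(\<Union>t\<in>set (map emb ls @ ins xs i (map (emb \<circ> snd) (take j cs) @ [xi enum Top (fst (cs ! j))])). vars t) \<subseteq> vars lhs"
        using va xi4 by (auto simp: ins_def)
      then show "\<forall>x\<in>(\<Union>t\<in>set (map emb ls @ ins xs i (map (emb \<circ> snd) (take j cs) @ [xi enum Top (fst (cs ! j))])). vars t). hinv ar R enum (\<sigma> x)"
        using hv by blast
    qed
    have gd: "good ar R enum f i (Suc j) (map (subst \<sigma>) (map emb ls @ ins xs i (map (emb \<circ> snd) (take j cs) @ [xi enum Top (fst (cs ! j))])))"
      unfolding good_def
      apply (rule exI[of _ ls], rule exI[of _ r], rule exI[of _ cs], rule exI[of _ \<sigma>])
      apply (rule exI[of _ "map \<sigma> (take (i-1) xs)"], rule exI[of _ "subst \<sigma> (xi enum Top (fst (cs ! j)))"])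
      apply (rule exI[of _ "map \<sigma> (drop i xs)"])
      using xi4 wa conds by (simp add: ins_map phs phi_xi \<theta>_def)
    have "hinv ar R enum (subst \<sigma> rhs)" using xi4 args gd by simp
    moreover have "phi ar (subst \<sigma> lhs) = subst \<theta> (Fun f ls)" by (simp only: xi4(1) phs phi_orig[OF E(3) wls] phi_auxs[OF E(3) wls])
    moreover have "phi ar (subst \<sigma> rhs) = subst \<theta> (Fun f ls)" by (simp only: xi4(2) phs phi_orig[OF E(3) wls] phi_auxs[OF E(3) wls])
    moreover have "(mur ar enum (subst \<sigma> rhs), mur ar enum (subst \<sigma> lhs)) \<in> lexr"
      using xi4 E mur_aux[of ls ar f xs "mcount enum f" i "map (emb \<circ> snd) (take j cs) @ [xi enum Top (fst (cs ! j))]" "Suc j" enum \<sigma>]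
        mur_aux[of ls ar f xs "mcount enum f" i "map (emb \<circ> snd) (take j cs)" j enum \<sigma>] by simp
    ultimately show ?thesis by simp
  next
    case (xi5 i f ls r cs xs j v)
    note E = enum_rule[OF xi5(3,4,5)]
    have wls: "\<forall>l\<in>set ls. wf_term ar l" using E(4) by blast
    have vr: "vars rhs \<subseteq> vars lhs" using xi5 by (auto simp: ins_def)
    have "hinv ar R enum (subst \<sigma> rhs)" using xi5 vr by (intro hnoaux) (auto simp: ins_def)
    moreover have "phi ar (subst \<sigma> lhs) = subst \<theta> (Fun f ls)" by (simp only: xi5(1) phs phi_orig[OF E(3) wls] phi_auxs[OF E(3) wls])
    moreover have "phi ar (subst \<sigma> rhs) = subst \<theta> (Fun f ls)" by (simp only: xi5(2) phs phi_orig[OF E(3) wls] phi_auxs[OF E(3) wls])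
    moreover have "(mur ar enum (subst \<sigma> rhs), mur ar enum (subst \<sigma> lhs)) \<in> lexr"
      using xi5 E mur_aux[of ls ar f xs "mcount enum f" i "map (emb \<circ> snd) (take (j - 1) cs) @ [v]" j enum \<sigma>]
        mur_orig[of "map emb ls" ar f xs "mcount enum f" i enum \<sigma> Bot] by simp
    ultimately show ?thesis by simp
  next
    case (xi6 i f ls r cs xs ys j v)
    note E = enum_rule[OF xi6(3,4,5)]
    have nv: "noaux v" using xi6 ap_noaux by blast
    have vr: "vars rhs \<subseteq> vars lhs" using xi6 by (auto simp: ins_def)
    have "hinv ar R enum (subst \<sigma> rhs)" using xi6 vr nv by (intro hnoaux) (auto simp: ins_def)
    moreover have lP: "length (ins ys j [v]) = ar f" using xi6 E by (simp add: ins_def)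
    moreover have "phi ar (subst \<sigma> rhs) = phi ar (subst \<sigma> lhs)" using xi6 lP by simp
    moreover have "(mur ar enum (subst \<sigma> rhs), mur ar enum (subst \<sigma> lhs)) \<in> lexr"
      using xi6 lP mur_orig[of "ins ys j [v]" ar f xs "mcount enum f" i enum \<sigma> Bot]
        mur_orig[of "ins ys j [v]" ar f xs "mcount enum f" i enum \<sigma> Top] by simp
    ultimately show ?thesis by simp
  qed
qed

end

lemma cs_step_cases:
  assumes "cs_step mu S t t'"
  shows "(\<exists>l r \<sigma>. (l, r) \<in> S \<and> t = subst \<sigma> l \<and> t' = subst \<sigma> r) \<or>
    (\<exists>g ss u u' ts. t = Fun g (ss @ u # ts) \<and> t' = Fun g (ss @ u' # ts) \<and> Suc (length ss) \<in> mu g \<and> cs_step mu S u u')"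
proof -
  from assms obtain C l r \<sigma> where *: "(l, r) \<in> S" "active_ctxt mu C" "t = plug C (subst \<sigma> l)" "t' = plug C (subst \<sigma> r)"
    unfolding cs_step_def by blast
  show ?thesis
  proof (cases C)
    case Hole then show ?thesis using * by auto
  next
    case (More g ss D ts)
    then have "cs_step mu S (plug D (subst \<sigma> l)) (plug D (subst \<sigma> r))" using * unfolding cs_step_def by auto
    then show ?thesis using * More by auto
  qed
qed

lemma cs_step_arg: "cs_step mu S u u' \<Longrightarrow> Suc (length ss) \<in> mu g \<Longrightarrow> cs_step mu S (Fun g (ss @ u # ts)) (Fun g (ss @ u' # ts))"
  unfolding cs_step_def by (metis active_ctxt.simps(2) plug.simps(2))

lemma rstep_arg: "rstep R u u' \<Longrightarrow> rstep R (Fun f (ss @ u # ts)) (Fun f (ss @ u' # ts))"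
  using rstep_ctxt[of R u u' "More f ss Hole ts"] by simp

context cset begin

definition csr where "csr = {(y, x). cs_step (mu_H ar) (Xi ar R enum) x y}"

lemma phi_aux_subst: "length ls = ar f \<Longrightarrow> \<forall>l\<in>set ls. wf_term ar l \<Longrightarrow>
   phi ar (Fun (Aux f i j) (map (subst \<sigma> \<circ> emb) ls @ rest)) = subst (phi ar \<circ> \<sigma>) (Fun f ls)"
  by (simp add: phi_subst phi_emb)

lemma good_dest:
  assumes "good ar R enum f i j ts"
  obtains ls r cs \<sigma> pre c post where "1 \<le> i" "i \<le> mcount enum f"
    "enum f ! (i-1) = (Fun f ls, r, cs)" "1 \<le> j" "j \<le> length cs"
    "length pre = i - 1" "length post = mcount enum f - i"
    "ts = map (subst \<sigma> \<circ> emb) ls @ pre @ map (subst \<sigma> \<circ> emb \<circ> snd) (take (j-1) cs) @ c # post"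
    "\<forall>k < j-1. (rstep R)\<^sup>*\<^sup>* (subst (phi ar \<circ> \<sigma>) (fst (cs!k))) (subst (phi ar \<circ> \<sigma>) (snd (cs!k)))"
    "(rstep R)\<^sup>*\<^sup>* (subst (phi ar \<circ> \<sigma>) (fst (cs!(j-1)))) (phi ar c)"
    "length ls = ar f" "\<forall>l\<in>set ls. wf_term ar l"
proof -
  from assms obtain ls r cs \<sigma> pre c post where *: "1 \<le> i" "i \<le> mcount enum f"
    "enum f ! (i-1) = (Fun f ls, r, cs)" "1 \<le> j" "j \<le> length cs"
    "length pre = i - 1" "length post = mcount enum f - i"
    "ts = map (subst \<sigma> \<circ> emb) ls @ pre @ map (subst \<sigma> \<circ> emb \<circ> snd) (take (j-1) cs) @ c # post"
    "\<forall>k < j-1. (rstep R)\<^sup>*\<^sup>* (subst (phi ar \<circ> \<sigma>) (fst (cs!k))) (subst (phi ar \<circ> \<sigma>) (snd (cs!k)))"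
    "(rstep R)\<^sup>*\<^sup>* (subst (phi ar \<circ> \<sigma>) (fst (cs!(j-1)))) (phi ar c)"
    unfolding good_def by blast
  note E = enum_rule[OF *(1,2,3)]
  have "\<forall>l\<in>set ls. wf_term ar l" using E(4) by blast
  then show ?thesis using that * E(3) by blast
qed

lemma arg_step:
  assumes h: "hinv ar R enum (Fun g (ss @ u # ts))" and pos: "Suc (length ss) \<in> mu_H ar g"
    and h': "hinv ar R enum u'" and ph: "phi ar u' = phi ar u \<or> rstep R (phi ar u) (phi ar u')"
  shows "hinv ar R enum (Fun g (ss @ u' # ts)) \<and> mur ar enum (Fun g (ss @ u' # ts)) = mur ar enum (Fun g (ss @ u # ts)) \<and>
     (phi ar (Fun g (ss @ u' # ts)) = phi ar (Fun g (ss @ u # ts)) \<or> rstep R (phi ar (Fun g (ss @ u # ts))) (phi ar (Fun g (ss @ u' # ts)))) \<and>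
     (\<forall>r. (u', u) \<in> r \<longrightarrow> (act ar (Fun g (ss @ u' # ts)), act ar (Fun g (ss @ u # ts))) \<in> listrel1 r)"
proof (cases g)
  case Bot then show ?thesis using pos by (simp add: mu_H_def)
next
  case Top then show ?thesis using pos by (simp add: mu_H_def)
next
  case (Orig f)
  then have ls: "length ss < ar f" using pos by (simp add: mu_H_def)
  have hi: "hinv ar R enum (Fun g (ss @ u' # ts))" using h h' Orig by auto
  have mu: "mur ar enum (Fun g (ss @ u' # ts)) = mur ar enum (Fun g (ss @ u # ts))" using ls Orig by (simp add: drop_Cons')
  have tk: "take (ar f) (map (phi ar) (ss @ x # ts)) = map (phi ar) ss @ phi ar x # take (ar f - Suc (length ss)) (map (phi ar) ts)" for x
    using ls by (simp add: take_append take_Cons')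
  have p: "phi ar (Fun g (ss @ u' # ts)) = phi ar (Fun g (ss @ u # ts)) \<or> rstep R (phi ar (Fun g (ss @ u # ts))) (phi ar (Fun g (ss @ u' # ts)))"
    using ph Orig by (simp only: phi.simps tk) (metis rstep_arg)
  have tk2: "take (ar f) (ss @ x # ts) = ss @ x # take (ar f - Suc (length ss)) ts" for x
    using ls by (simp add: take_append take_Cons')
  have "(act ar (Fun g (ss @ u' # ts)), act ar (Fun g (ss @ u # ts))) \<in> listrel1 r" if "(u', u) \<in> r" for r
    using Orig that by (simp only: act.simps tk2) (rule listrel1I, auto)
  then show ?thesis using hi mu p by blast
next
  case (Aux f i j)
  from h Aux have gd: "good ar R enum f i j (ss @ u # ts)" by simp
  from h Aux have hargs: "\<forall>t\<in>set (ss @ u # ts). hinv ar R enum t" by simp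
  obtain ls r cs \<sigma> pre c post where G: "1 \<le> i" "i \<le> mcount enum f"
    "enum f ! (i-1) = (Fun f ls, r, cs)" "1 \<le> j" "j \<le> length cs"
    "length pre = i - 1" "length post = mcount enum f - i"
    "ss @ u # ts = map (subst \<sigma> \<circ> emb) ls @ pre @ map (subst \<sigma> \<circ> emb \<circ> snd) (take (j-1) cs) @ c # post"
    "\<forall>k < j-1. (rstep R)\<^sup>*\<^sup>* (subst (phi ar \<circ> \<sigma>) (fst (cs!k))) (subst (phi ar \<circ> \<sigma>) (snd (cs!k)))"
    "(rstep R)\<^sup>*\<^sup>* (subst (phi ar \<circ> \<sigma>) (fst (cs!(j-1)))) (phi ar c)"
    "length ls = ar f" "\<forall>l\<in>set ls. wf_term ar l"
    by (rule good_dest[OF gd])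
  have lss: "length ss = ar f + i + j - 2" using pos Aux by (simp add: mu_H_def)
  define A where "A = map (subst \<sigma> \<circ> emb) ls @ pre @ map (subst \<sigma> \<circ> emb \<circ> snd) (take (j-1) cs)"
  have lA: "length A = length ss" using G lss by (simp add: A_def)
  from G(8) have "ss @ u # ts = A @ c # post" by (simp add: A_def)
  with lA have sA: "ss = A" and uc: "u = c" and tp: "ts = post" by (simp_all add: append_eq_append_conv)
  have gd': "good ar R enum f i j (ss @ u' # ts)"
    unfolding good_def
    apply (rule exI[of _ ls], rule exI[of _ r], rule exI[of _ cs], rule exI[of _ \<sigma>])
    apply (rule exI[of _ pre], rule exI[of _ u'], rule exI[of _ post])
    using G sA tp uc ph by (auto simp: A_def intro: rtranclp.rtrancl_into_rtrancl)
  have hi: "hinv ar R enum (Fun g (ss @ u' # ts))" using hargs h' gd' Aux by auto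
  have ge: "ar f \<le> length ss" "ar f + (i - 1) \<le> length ss" using lss G by auto
  have mu: "mur ar enum (Fun g (ss @ u' # ts)) = mur ar enum (Fun g (ss @ u # ts))"
  proof -
    have T1: "take (i-1) (drop (ar f) (ss @ x # ts)) = take (i-1) (drop (ar f) ss)" for x using ge by simp
    have T2: "drop (ar f + (i-1) + j) (ss @ x # ts) = ts" for x using lss G by simp
    show ?thesis by (simp only: Aux mur.simps T1 T2)
  qed
  have p: "phi ar (Fun g (ss @ u' # ts)) = phi ar (Fun g (ss @ u # ts))" using Aux ge by simp
  have ix: "ar f + i + j - 2 = length ss" using lss by simp
  have "(act ar (Fun g (ss @ u' # ts)), act ar (Fun g (ss @ u # ts))) \<in> listrel1 r" if "(u', u) \<in> r" for r
    using Aux that ix by (simp add: listrel1I1)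
  then show ?thesis using hi mu p by blast
qed

lemma step_inv: "cs_step (mu_H ar) (Xi ar R enum) t t' \<Longrightarrow> hinv ar R enum t \<Longrightarrow>
  hinv ar R enum t' \<and> (phi ar t' = phi ar t \<or> rstep R (phi ar t) (phi ar t'))"
proof -
  assume "cs_step (mu_H ar) (Xi ar R enum) t t'" "hinv ar R enum t"
  then obtain C l r \<sigma> where *: "(l, r) \<in> Xi ar R enum" "active_ctxt (mu_H ar) C" "t = plug C (subst \<sigma> l)" "t' = plug C (subst \<sigma> r)"
    and h: "hinv ar R enum t"
    unfolding cs_step_def by blast
  have "hinv ar R enum (plug C (subst \<sigma> l)) \<Longrightarrow> active_ctxt (mu_H ar) C \<Longrightarrow>
     hinv ar R enum (plug C (subst \<sigma> r)) \<and> (phi ar (plug C (subst \<sigma> r)) = phi ar (plug C (subst \<sigma> l)) \<or>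
       rstep R (phi ar (plug C (subst \<sigma> l))) (phi ar (plug C (subst \<sigma> r))))"
  proof (induction C)
    case Hole then show ?case using root_step[OF *(1)] by auto
  next
    case (More g ss C ts)
    from More.prems have hc: "hinv ar R enum (plug C (subst \<sigma> l))" by simp
    from More.IH[OF hc] More.prems have ih: "hinv ar R enum (plug C (subst \<sigma> r)) \<and> (phi ar (plug C (subst \<sigma> r)) = phi ar (plug C (subst \<sigma> l)) \<or>
       rstep R (phi ar (plug C (subst \<sigma> l))) (phi ar (plug C (subst \<sigma> r))))" by simp
    from arg_step[of g ss "plug C (subst \<sigma> l)" ts "plug C (subst \<sigma> r)"] More.prems ih show ?case by simp
  qed
  then show ?thesis using * h by simp
qed

end

lemma size_plug: "size v \<le> size (plug D v)" "D \<noteq> Hole \<Longrightarrow> size v < size (plug D v)"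
proof (induction D)
  case Hole
  { case 1 show ?case by simp }
  { case 2 then show ?case by simp }
next
  case (More f ss D ts)
  have "size (plug D v) < size (plug (More f ss D ts) v)" by simp
  then show "size v \<le> size (plug (More f ss D ts) v)" "size v < size (plug (More f ss D ts) v)"
    using More.IH(1) by linarith+
qed

definition rs :: "('f, 'v) crule set \<Rightarrow> (('f, 'v) term \<times> ('f, 'v) term) set" where
  "rs R = {(v, u). rstep R u v \<or> sqsup R u v}"
definition comb :: "('f, 'v) crule set \<Rightarrow> (('f, 'v) term \<times> ('f, 'v) term) set" where
  "comb R = {(v, u). rstep R u v \<or> sqsup R u v \<or> (\<exists>D. D \<noteq> Hole \<and> u = plug D v)}"

lemma qd_acc_rs: "quasi_decreasing_term R u \<Longrightarrow> u \<in> Wellfounded.acc (rs R)"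
proof (rule ccontr)
  assume q: "quasi_decreasing_term R u" and na: "u \<notin> Wellfounded.acc (rs R)"
  from chain_not_acc[OF na] obtain f where "f 0 = u" "\<forall>i. (f (Suc i), f i) \<in> rs R" by blast
  with q show False unfolding quasi_decreasing_term_def rs_def by blast
qed

lemma acc_rs_comb: "u \<in> Wellfounded.acc (rs R) \<Longrightarrow> \<forall>D v. u = plug D v \<longrightarrow> v \<in> Wellfounded.acc (comb R)"
proof (induction rule: acc_induct_rule)
  case (1 u)
  have "\<forall>v. size v = n \<longrightarrow> (\<forall>D. u = plug D v \<longrightarrow> v \<in> Wellfounded.acc (comb R))" for n
  proof (induction n rule: less_induct)
    case (less n)
    show ?case
    proof (intro allI impI)
      fix v D assume sz: "size v = n" and uv: "u = plug D v"
      show "v \<in> Wellfounded.acc (comb R)"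
      proof (rule accI)
        fix w assume "(w, v) \<in> comb R"
        then consider "rstep R v w" | "sqsup R v w" | D' where "D' \<noteq> Hole" "v = plug D' w"
          unfolding comb_def by blast
        then show "w \<in> Wellfounded.acc (comb R)"
        proof cases
          case 1
          then have "(plug D w, u) \<in> rs R" using uv rstep_ctxt unfolding rs_def by blast
          then show ?thesis using "1.IH" by blast
        next
          case 2
          then have "(w, u) \<in> rs R" using uv sqsup_ctxt unfolding rs_def by blast
          then show ?thesis using "1.IH"[of w] by (metis plug.simps(1))
        next
          case 3
          then have "size w < n" using sz size_plug(2) by blast
          moreover have "u = plug (ccomp D D') w" using uv 3 by simp
          ultimately show ?thesis using less by blast
        qed
      qed
    qed
  qed
  then show ?case by blast
qed

lemma qd_acc_comb: "quasi_decreasing_term R u \<Longrightarrow> u \<in> Wellfounded.acc ((comb R)\<^sup>+)"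
  using acc_rs_comb[OF qd_acc_rs, of R u] acc_trancl by (metis plug.simps(1))

lemma rsteps_comb: "(rstep R)\<^sup>*\<^sup>* x y \<Longrightarrow> (y, x) \<in> (comb R)\<^sup>*"
proof (induction rule: rtranclp_induct)
  case base then show ?case by simp
next
  case (step y z)
  then have "(z, y) \<in> comb R" unfolding comb_def by blast
  then show ?case using step.IH by (rule converse_rtrancl_into_rtrancl)
qed

context cset begin

lemma main_sn: "p \<in> Wellfounded.acc ((comb R)\<^sup>+) \<Longrightarrow> \<forall>t. phi ar t = p \<longrightarrow> hinv ar R enum t \<longrightarrow> t \<in> Wellfounded.acc csr"
proof (induction rule: acc_induct_rule)
  case (1 p)
  note outer = "1.IH"
  have outerI: "t \<in> Wellfounded.acc csr" if "(phi ar t, p) \<in> (comb R)\<^sup>+" "hinv ar R enum t" for t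
    using outer that by blast
  have argsacc: "\<forall>a\<in>set (act ar t). a \<in> Wellfounded.acc csr" if pt: "phi ar t = p" and ht: "hinv ar R enum t" for t
  proof (cases t)
    case (Var x) then show ?thesis by simp
  next
    case (Fun g ts)
    show ?thesis
    proof (cases g)
      case Bot then show ?thesis using Fun by simp
    next
      case Top then show ?thesis using Fun by simp
    next
      case (Orig f)
      show ?thesis
      proof
        fix a assume "a \<in> set (act ar t)"
        then have a: "a \<in> set (take (ar f) ts)" using Fun Orig by simp
        then obtain A B where AB: "take (ar f) ts = A @ a # B" by (meson split_list)
        have ha: "hinv ar R enum a" using ht Fun a by (auto dest: in_set_takeD)
        have "p = Fun f (map (phi ar) (take (ar f) ts))" using pt Fun Orig by (simp add: take_map)
        then have "p = plug (More f (map (phi ar) A) Hole (map (phi ar) B)) (phi ar a)" using AB by simp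
        then have "(phi ar a, p) \<in> comb R" unfolding comb_def by blast
        then show "a \<in> Wellfounded.acc csr" using outerI ha by blast
      qed
    next
      case (Aux f i j)
      from ht Fun Aux have gd: "good ar R enum f i j ts" by simp
      obtain ls r cs \<sigma> pre c post where G: "1 \<le> i" "i \<le> mcount enum f"
        "enum f ! (i-1) = (Fun f ls, r, cs)" "1 \<le> j" "j \<le> length cs"
        "length pre = i - 1" "length post = mcount enum f - i"
        "ts = map (subst \<sigma> \<circ> emb) ls @ pre @ map (subst \<sigma> \<circ> emb \<circ> snd) (take (j-1) cs) @ c # post"
        "\<forall>k < j-1. (rstep R)\<^sup>*\<^sup>* (subst (phi ar \<circ> \<sigma>) (fst (cs!k))) (subst (phi ar \<circ> \<sigma>) (snd (cs!k)))"
        "(rstep R)\<^sup>*\<^sup>* (subst (phi ar \<circ> \<sigma>) (fst (cs!(j-1)))) (phi ar c)"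
        "length ls = ar f" "\<forall>l\<in>set ls. wf_term ar l"
        by (rule good_dest[OF gd])
      define L where "L = map (subst \<sigma> \<circ> emb) ls @ pre @ map (subst \<sigma> \<circ> emb \<circ> snd) (take (j-1) cs)"
      have tsL: "ts = L @ c # post" using G(8) by (simp add: L_def)
      have lL: "length L = ar f + i + j - 2" using G by (simp add: L_def)
      have actc: "act ar t = [c]" using Fun Aux tsL lL by (simp add: nth_append)
      have hc: "hinv ar R enum c" using ht Fun tsL by simp
      have "phi ar t = subst (phi ar \<circ> \<sigma>) (Fun f ls)"
        unfolding Fun Aux G(8) by (rule phi_aux_subst[OF G(11,12)])
      then have pp: "p = subst (phi ar \<circ> \<sigma>) (Fun f ls)" using pt by simp
      have inR: "(Fun f ls, r, cs) \<in> R" using enum_rule(1)[OF G(1,2,3)] .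
      have "sqsup R p (subst (phi ar \<circ> \<sigma>) (fst (cs!(j-1))))"
        unfolding sqsup_def
        apply (rule exI[of _ Hole], rule exI[of _ "Fun f ls"], rule exI[of _ r], rule exI[of _ cs])
        apply (rule exI[of _ "phi ar \<circ> \<sigma>"], rule exI[of _ "j - 1"])
        using inR G pp by auto
      then have "(subst (phi ar \<circ> \<sigma>) (fst (cs!(j-1))), p) \<in> comb R" unfolding comb_def by blast
      with rsteps_comb[OF G(10)] have "(phi ar c, p) \<in> (comb R)\<^sup>+" by (rule rtrancl_into_trancl1)
      then show ?thesis using actc outerI hc by simp
    qed
  qed
  have "\<forall>t. phi ar t = p \<longrightarrow> hinv ar R enum t \<longrightarrow> mur ar enum t = m \<longrightarrow> t \<in> Wellfounded.acc csr" for m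
  proof (induction m rule: wf_induct[OF wf_lex_prod[OF wf_less_than wf_less_than]])
    case (1 m)
    note muIH = "1.IH"
    show ?case
    proof (intro allI impI)
      fix t assume pt: "phi ar t = p" and ht: "hinv ar R enum t" and mt: "mur ar enum t = m"
      have actacc: "act ar t \<in> Wellfounded.acc (listrel1 csr)"
        using argsacc[OF pt ht] by (intro lists_accD) auto
      have AI: "as \<in> Wellfounded.acc (listrel1 csr) \<Longrightarrow> \<forall>t. act ar t = as \<longrightarrow> phi ar t = p \<longrightarrow> hinv ar R enum t \<longrightarrow> mur ar enum t = m \<longrightarrow> t \<in> Wellfounded.acc csr"
        for as
      proof (induction as rule: acc_induct_rule)
        case (1 as)
        note actIH = "1.IH"
        have "as \<in> Wellfounded.acc (listrel1 csr)" using "1" by (blast intro: accI)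
        show ?case
        proof (intro allI impI)
          fix t assume at: "act ar t = as" and pt: "phi ar t = p" and ht: "hinv ar R enum t" and mt: "mur ar enum t = m"
          show "t \<in> Wellfounded.acc csr"
          proof (rule accI)
            fix t' assume "(t', t) \<in> csr"
            then have st: "cs_step (mu_H ar) (Xi ar R enum) t t'" by (simp add: csr_def)
            from cs_step_cases[OF st] show "t' \<in> Wellfounded.acc csr"
            proof
              assume "\<exists>l r \<sigma>. (l, r) \<in> Xi ar R enum \<and> t = subst \<sigma> l \<and> t' = subst \<sigma> r"
              then obtain l r \<sigma> where lr: "(l, r) \<in> Xi ar R enum" "t = subst \<sigma> l" "t' = subst \<sigma> r" by blast
              from root_step[OF lr(1)] ht lr have
                rs: "hinv ar R enum t' \<and> ((phi ar t' = phi ar t \<and> (mur ar enum t', mur ar enum t) \<in> lexr) \<or> rstep R (phi ar t) (phi ar t'))"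
                by simp
              then show ?thesis
              proof (elim conjE disjE)
                assume "hinv ar R enum t'" "phi ar t' = phi ar t" "(mur ar enum t', mur ar enum t) \<in> lexr"
                then show ?thesis using muIH pt mt by blast
              next
                assume "hinv ar R enum t'" "rstep R (phi ar t) (phi ar t')"
                then have "(phi ar t', p) \<in> (comb R)\<^sup>+" using pt unfolding comb_def by blast
                then show ?thesis using outerI \<open>hinv ar R enum t'\<close> by blast
              qed
            next
              assume "\<exists>g ss u u' ts. t = Fun g (ss @ u # ts) \<and> t' = Fun g (ss @ u' # ts) \<and> Suc (length ss) \<in> mu_H ar g \<and> cs_step (mu_H ar) (Xi ar R enum) u u'"
              then obtain g ss u u' ts where tt: "t = Fun g (ss @ u # ts)" "t' = Fun g (ss @ u' # ts)"
                "Suc (length ss) \<in> mu_H ar g" and su: "cs_step (mu_H ar) (Xi ar R enum) u u'" by blast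
              have hu: "hinv ar R enum u" using ht tt by simp
              from step_inv[OF su hu] have su': "hinv ar R enum u'" "phi ar u' = phi ar u \<or> rstep R (phi ar u) (phi ar u')" by auto
              from arg_step[OF ht[unfolded tt(1)] tt(3) su'] tt
              have A: "hinv ar R enum t'" "mur ar enum t' = mur ar enum t"
                "phi ar t' = phi ar t \<or> rstep R (phi ar t) (phi ar t')"
                "\<forall>r. (u', u) \<in> r \<longrightarrow> (act ar t', act ar t) \<in> listrel1 r" by auto
              have "(u', u) \<in> csr" using su by (simp add: csr_def)
              with A(4) have la: "(act ar t', as) \<in> listrel1 csr" using at by blast
              from A(3) show ?thesis
              proof
                assume "phi ar t' = phi ar t"
                then show ?thesis using actIH[OF la] acc_downward[OF \<open>as \<in> Wellfounded.acc (listrel1 csr)\<close> la] A(1,2) pt mt by auto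
              next
                assume "rstep R (phi ar t) (phi ar t')"
                then have "(phi ar t', p) \<in> (comb R)\<^sup>+" using pt unfolding comb_def by blast
                then show ?thesis using outerI A(1) by blast
              qed
            qed
          qed
        qed
      qed
      then show "t \<in> Wellfounded.acc csr" using AI[OF actacc] pt ht mt by blast
    qed
  qed
  then show ?case by blast
qed

end

lemma xi_subst: "xi enum st (subst \<sigma> t) = subst (xi enum st \<circ> \<sigma>) (xi enum st t)"
  by (induction t) auto

fun xic :: "('f \<Rightarrow> ('f, 'v) crule list) \<Rightarrow> ('f, 'v) ctxt \<Rightarrow> ('f hsym, 'v) ctxt" where
  "xic enum Hole = Hole"
| "xic enum (More f ss C ts) = More (Orig f) (map (xi enum Top) ss) (xic enum C) (map (xi enum Top) ts @ replicate (mcount enum f) (hconst Top))"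

lemma xi_plug: "xi enum Top (plug C t) = plug (xic enum C) (xi enum Top t)"
  by (induction C) auto

lemma xic_active: "wf_term ar (plug C t) \<Longrightarrow> active_ctxt (mu_H ar) (xic enum C)"
  by (induction C) (auto simp: mu_H_def)

lemma wf_subst: "wf_term ar (subst \<sigma> t) \<longleftrightarrow> wf_term ar t \<and> (\<forall>x\<in>vars t. wf_term ar (\<sigma> x))"
  by (induction t) auto

lemma wf_plug: "wf_term ar (plug C t) \<Longrightarrow> wf_term ar t" "wf_term ar (plug C t) \<Longrightarrow> wf_term ar t' \<Longrightarrow> wf_term ar (plug C t')"
  by (induction C) auto

lemma cs_root: "(l, r) \<in> S \<Longrightarrow> cs_step mu S (subst \<sigma> l) (subst \<sigma> r)"
  unfolding cs_step_def by (rule exI[of _ Hole]) auto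

lemma cs_ctxt: "cs_step mu S s t \<Longrightarrow> active_ctxt mu C \<Longrightarrow> cs_step mu S (plug C s) (plug C t)"
  unfolding cs_step_def by (metis active_comp plug_comp)

lemma cs_ctxt_plus: "(cs_step mu S)\<^sup>+\<^sup>+ s t \<Longrightarrow> active_ctxt mu C \<Longrightarrow> (cs_step mu S)\<^sup>+\<^sup>+ (plug C s) (plug C t)"
  by (induction rule: tranclp_induct) (auto intro: tranclp.trancl_into_trancl cs_ctxt)

lemma cs_ctxt_star: "(cs_step mu S)\<^sup>*\<^sup>* s t \<Longrightarrow> active_ctxt mu C \<Longrightarrow> (cs_step mu S)\<^sup>*\<^sup>* (plug C s) (plug C t)"
  by (induction rule: rtranclp_induct) (auto intro: rtranclp.rtrancl_into_rtrancl cs_ctxt)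

lemma rep_split: "1 \<le> i \<Longrightarrow> i \<le> m \<Longrightarrow> replicate m x = replicate (i-1) x @ x # replicate (m-i) x"
proof -
  assume "1 \<le> i" "i \<le> m"
  then have "m = (i - 1) + Suc (m - i)" by simp
  then show ?thesis by (metis replicate_Suc replicate_add)
qed

lemma fresh_list: assumes "infinite (UNIV :: 'v set)" "finite (V :: 'v set)"
  shows "\<exists>xs. distinct xs \<and> length xs = n \<and> set xs \<inter> V = {}"
proof -
  have "infinite (UNIV - V)" using assms by (simp add: Diff_infinite_finite)
  from infinite_arbitrarily_large[OF this] obtain B where B: "B \<subseteq> UNIV - V" "finite B" "card B = n" by blast
  from finite_distinct_list[OF B(2)] obtain xs where "set xs = B" "distinct xs" by blast
  then show ?thesis using B distinct_card by (intro exI[of _ xs]) fastforce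
qed

lemma finite_vars: "finite (vars t)" by (simp add: vars_def)

lemma finite_rule_vars: "finite (rule_vars \<rho>)"
  unfolding rule_vars_def by (auto simp: finite_vars split: prod.splits)


lemma map_const_rep: "\<forall>x\<in>set ys. g x = c \<Longrightarrow> map g ys = replicate (length ys) c"
  by (induction ys) auto

context cset begin

lemma rule_index: assumes "(Fun f ls, r, cs) \<in> R"
  shows "\<exists>i. 1 \<le> i \<and> i \<le> mcount enum f \<and> enum f ! (i-1) = (Fun f ls, r, cs)"
proof -
  have "(Fun f ls, r, cs) \<in> rules_of R f" using assms by (simp add: rules_of_def)
  then have "(Fun f ls, r, cs) \<in> set (enum f)" using en by (simp add: enumeration_def)
  then obtain k where "k < length (enum f)" "enum f ! k = (Fun f ls, r, cs)" by (meson in_set_conv_nth)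
  then show ?thesis by (intro exI[of _ "Suc k"]) (simp add: mcount_def)
qed

definition AB :: "('v \<Rightarrow> ('f, 'v) term) \<Rightarrow> 'f \<Rightarrow> nat \<Rightarrow> nat \<Rightarrow> ('f, 'v) term list \<Rightarrow> (('f, 'v) term \<times> ('f, 'v) term) list
   \<Rightarrow> ('f hsym, 'v) term \<Rightarrow> ('f hsym, 'v) term" where
  "AB \<sigma> f i j ls cs u = Fun (Aux f i j) (map (xi enum Top \<circ> subst \<sigma>) ls @ replicate (i-1) (hconst Top) @
     map (xi enum Top \<circ> subst \<sigma> \<circ> snd) (take (j-1) cs) @ u # replicate (mcount enum f - i) (hconst Top))"

lemma sim_rule:
  assumes i: "1 \<le> i" "i \<le> mcount enum f" and e: "enum f ! (i-1) = (Fun f ls, r, cs)"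
    and xs: "distinct xs" "length xs = mcount enum f" "set xs \<inter> rule_vars (Fun f ls, r, cs) = {}"
  shows "cs = [] \<Longrightarrow> cs_step (mu_H ar) (Xi ar R enum) (xi enum Top (subst \<sigma> (Fun f ls))) (xi enum Top (subst \<sigma> r))"
    and "cs \<noteq> [] \<Longrightarrow> cs_step (mu_H ar) (Xi ar R enum) (xi enum Top (subst \<sigma> (Fun f ls)))
            (AB \<sigma> f i 1 ls cs (xi enum Top (subst \<sigma> (fst (cs!0)))))"
    and "1 \<le> j \<Longrightarrow> j < length cs \<Longrightarrow> cs_step (mu_H ar) (Xi ar R enum)
            (AB \<sigma> f i j ls cs (xi enum Top (subst \<sigma> (snd (cs!(j-1))))))
            (AB \<sigma> f i (Suc j) ls cs (xi enum Top (subst \<sigma> (fst (cs!j)))))"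
    and "cs \<noteq> [] \<Longrightarrow> cs_step (mu_H ar) (Xi ar R enum)
            (AB \<sigma> f i (length cs) ls cs (xi enum Top (subst \<sigma> (snd (cs!(length cs - 1))))))
            (xi enum Top (subst \<sigma> r))"
    and "1 \<le> j \<Longrightarrow> j \<le> length cs \<Longrightarrow> (cs_step (mu_H ar) (Xi ar R enum))\<^sup>*\<^sup>* u u' \<Longrightarrow>
          (cs_step (mu_H ar) (Xi ar R enum))\<^sup>*\<^sup>* (AB \<sigma> f i j ls cs u) (AB \<sigma> f i j ls cs u')"
proof -
  note E = enum_rule[OF i e]
  define T where "T = xi enum Top"
  define m where "m = mcount enum f"
  define \<tau> where "\<tau> = (\<lambda>x. if x \<in> set xs then hconst Top else T (\<sigma> x))"
  have K: "subst \<tau> (T t) = T (subst \<sigma> t)" if "vars t \<inter> set xs = {}" for t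
  proof -
    have "T (subst \<sigma> t) = subst (T \<circ> \<sigma>) (T t)" by (simp add: T_def xi_subst)
    also have "\<dots> = subst \<tau> (T t)" using that by (intro subst_cong) (auto simp: \<tau>_def T_def)
    finally show ?thesis by simp
  qed
  have K': "subst \<tau> (xi enum Top t) = T (subst \<sigma> t)" if "vars t \<inter> set xs = {}" for t
    using K[OF that] by (simp add: T_def)
  have KE: "subst \<tau> (emb t) = T (subst \<sigma> t)" if "vars t \<inter> set xs = {}" "constr_term R t" for t
    using K[OF that(1)] xi_constr[OF that(2)] by (simp add: T_def)
  have rv: "rule_vars (Fun f ls, r, cs) = (\<Union>l\<in>set ls. vars l) \<union> vars r \<union> (\<Union>(a, b) \<in> set cs. vars a \<union> vars b)"
    by (simp add: rule_vars_def)
  have vl: "vars l \<inter> set xs = {}" if "l \<in> set ls" for l using xs(3) that rv by blast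
  have vr: "vars r \<inter> set xs = {}" using xs(3) rv by blast
  have va: "vars (fst p) \<inter> set xs = {}" "vars (snd p) \<inter> set xs = {}" if "p \<in> set cs" for p
  proof -
    have "(case p of (a, b) \<Rightarrow> vars a \<union> vars b) \<subseteq> (\<Union>(a, b) \<in> set cs. vars a \<union> vars b)" using that by blast
    then have "vars (fst p) \<union> vars (snd p) \<subseteq> rule_vars (Fun f ls, r, cs)" using rv by (cases p) auto
    then show "vars (fst p) \<inter> set xs = {}" "vars (snd p) \<inter> set xs = {}" using xs(3) by auto
  qed
  have cb: "constr_term R (snd p)" if "p \<in> set cs" for p using E(6) that by auto
  have cl: "constr_term R l" if "l \<in> set ls" for l using E(4) that by auto
  have mls: "map (subst \<tau> \<circ> emb) ls = map (T \<circ> subst \<sigma>) ls" using KE vl cl by simp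
  have mcs: "map (subst \<tau> \<circ> emb \<circ> snd) cs' = map (T \<circ> subst \<sigma> \<circ> snd) cs'" if "set cs' \<subseteq> set cs" for cs'
    using KE va cb that by auto
  have tk: "map \<tau> (take (i-1) xs) = replicate (i-1) (hconst Top)"
  proof -
    have "\<forall>x\<in>set (take (i-1) xs). \<tau> x = hconst Top" by (auto simp: \<tau>_def dest: in_set_takeD)
    from map_const_rep[OF this] show ?thesis using i xs(2) by simp
  qed
  have dr: "map \<tau> (drop i xs) = replicate (m-i) (hconst Top)"
  proof -
    have "\<forall>x\<in>set (drop i xs). \<tau> x = hconst Top" by (auto simp: \<tau>_def dest: in_set_dropD)
    from map_const_rep[OF this] show ?thesis using i xs(2) by (simp add: m_def)
  qed
  have LO: "subst \<tau> (Fun (Orig f) (map emb ls @ ins xs i [hconst Top])) = T (subst \<sigma> (Fun f ls))"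
    using mls tk dr rep_split[OF i, of "hconst Top", symmetric] by (simp add: ins_map T_def m_def)
  have LA: "subst \<tau> (Fun (Aux f i j) (map emb ls @ ins xs i L)) =
     Fun (Aux f i j) (map (T \<circ> subst \<sigma>) ls @ replicate (i-1) (hconst Top) @ map (subst \<tau>) L @ replicate (m-i) (hconst Top))" for j L
    using mls tk dr by (simp add: ins_map)
  have tkj: "map (T \<circ> subst \<sigma> \<circ> snd) (take j cs) = map (T \<circ> subst \<sigma> \<circ> snd) (take (j-1) cs) @ [T (subst \<sigma> (snd (cs ! (j-1))))]"
    if "1 \<le> j" "j \<le> length cs" for j
  proof -
    have "take j cs = take (j-1) cs @ [cs ! (j-1)]" using that
      by (metis Suc_diff_1 Suc_le_eq less_le_trans take_Suc_conv_app_nth zero_less_one)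
    then show ?thesis by simp
  qed
  have ABd: "AB \<sigma> f i j ls cs u = Fun (Aux f i j) (map (T \<circ> subst \<sigma>) ls @ replicate (i-1) (hconst Top) @
     map (T \<circ> subst \<sigma> \<circ> snd) (take (j-1) cs) @ u # replicate (m-i) (hconst Top))" for j u
    by (simp add: AB_def T_def m_def)
  show "cs = [] \<Longrightarrow> cs_step (mu_H ar) (Xi ar R enum) (xi enum Top (subst \<sigma> (Fun f ls))) (xi enum Top (subst \<sigma> r))"
  proof -
    assume c: "cs = []"
    have "(Fun (Orig f) (map emb ls @ ins xs i [hconst Top]), xi enum Top r) \<in> Xi ar R enum"
      using i e xs c by (intro Xi.xi1) auto
    from cs_root[OF this, of "mu_H ar" \<tau>] have "cs_step (mu_H ar) (Xi ar R enum) (T (subst \<sigma> (Fun f ls))) (T (subst \<sigma> r))"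
      by (simp only: LO K'[OF vr])
    then show ?thesis unfolding T_def .
  qed
  show "cs \<noteq> [] \<Longrightarrow> cs_step (mu_H ar) (Xi ar R enum) (xi enum Top (subst \<sigma> (Fun f ls)))
            (AB \<sigma> f i 1 ls cs (xi enum Top (subst \<sigma> (fst (cs!0)))))"
  proof -
    assume c: "cs \<noteq> []"
    have "(Fun (Orig f) (map emb ls @ ins xs i [hconst Top]),
      Fun (Aux f i 1) (map emb ls @ ins xs i [xi enum Top (fst (cs ! 0))])) \<in> Xi ar R enum"
      using i e xs c by (intro Xi.xi2) auto
    from cs_root[OF this, of "mu_H ar" \<tau>]
    have "cs_step (mu_H ar) (Xi ar R enum) (T (subst \<sigma> (Fun f ls)))
      (Fun (Aux f i 1) (map (T \<circ> subst \<sigma>) ls @ replicate (i-1) (hconst Top) @ map (subst \<tau>) [xi enum Top (fst (cs ! 0))] @ replicate (m-i) (hconst Top)))"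
      by (simp only: LO LA)
    moreover have "subst \<tau> (xi enum Top (fst (cs ! 0))) = T (subst \<sigma> (fst (cs ! 0)))"
      using K va c by (simp add: T_def)
    ultimately show ?thesis by (simp add: ABd T_def)
  qed
  show "1 \<le> j \<Longrightarrow> j < length cs \<Longrightarrow> cs_step (mu_H ar) (Xi ar R enum)
            (AB \<sigma> f i j ls cs (xi enum Top (subst \<sigma> (snd (cs!(j-1))))))
            (AB \<sigma> f i (Suc j) ls cs (xi enum Top (subst \<sigma> (fst (cs!j)))))"
  proof -
    assume j: "1 \<le> j" "j < length cs"
    have X: "(Fun (Aux f i j) (map emb ls @ ins xs i (map (emb \<circ> snd) (take j cs))),
      Fun (Aux f i (Suc j)) (map emb ls @
         ins xs i (map (emb \<circ> snd) (take j cs) @ [xi enum Top (fst (cs ! j))]))) \<in> Xi ar R enum"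
      using i e xs j by (intro Xi.xi4) auto
    have M: "map (subst \<tau>) (map (emb \<circ> snd) (take j cs)) = map (T \<circ> subst \<sigma> \<circ> snd) (take j cs)"
      using mcs[of "take j cs"] by (simp add: set_take_subset)
    have Ka: "subst \<tau> (xi enum Top (fst (cs ! j))) = T (subst \<sigma> (fst (cs ! j)))"
      using K' va j by simp
    have eq1: "subst \<tau> (Fun (Aux f i j) (map emb ls @ ins xs i (map (emb \<circ> snd) (take j cs)))) =
      Fun (Aux f i j) (map (T \<circ> subst \<sigma>) ls @ replicate (i-1) (hconst Top) @ map (T \<circ> subst \<sigma> \<circ> snd) (take j cs) @ replicate (m-i) (hconst Top))"
      by (simp only: LA M)
    have eq2: "subst \<tau> (Fun (Aux f i (Suc j)) (map emb ls @
         ins xs i (map (emb \<circ> snd) (take j cs) @ [xi enum Top (fst (cs ! j))]))) =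
      Fun (Aux f i (Suc j)) (map (T \<circ> subst \<sigma>) ls @ replicate (i-1) (hconst Top) @ (map (T \<circ> subst \<sigma> \<circ> snd) (take j cs) @ [T (subst \<sigma> (fst (cs ! j)))]) @ replicate (m-i) (hconst Top))"
      by (simp only: LA map_append list.map M Ka)
    from cs_root[OF X, of "mu_H ar" \<tau>, unfolded eq1 eq2]
    have "cs_step (mu_H ar) (Xi ar R enum)
      (AB \<sigma> f i j ls cs (T (subst \<sigma> (snd (cs!(j-1))))))
      (AB \<sigma> f i (Suc j) ls cs (T (subst \<sigma> (fst (cs!j)))))"
      using tkj[of j] j by (simp add: ABd)
    then show ?thesis unfolding T_def .
  qed
  show "cs \<noteq> [] \<Longrightarrow> cs_step (mu_H ar) (Xi ar R enum)
            (AB \<sigma> f i (length cs) ls cs (xi enum Top (subst \<sigma> (snd (cs!(length cs - 1))))))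
            (xi enum Top (subst \<sigma> r))"
  proof -
    assume c: "cs \<noteq> []"
    have X: "(Fun (Aux f i (length cs)) (map emb ls @ ins xs i (map (emb \<circ> snd) cs)), xi enum Top r) \<in> Xi ar R enum"
      using i e xs c by (intro Xi.xi3) auto
    have M: "map (subst \<tau>) (map (emb \<circ> snd) cs) = map (T \<circ> subst \<sigma> \<circ> snd) (take (length cs) cs)"
      using mcs[of cs] by simp
    have eq1: "subst \<tau> (Fun (Aux f i (length cs)) (map emb ls @ ins xs i (map (emb \<circ> snd) cs))) =
      Fun (Aux f i (length cs)) (map (T \<circ> subst \<sigma>) ls @ replicate (i-1) (hconst Top) @ map (T \<circ> subst \<sigma> \<circ> snd) (take (length cs) cs) @ replicate (m-i) (hconst Top))"
      by (simp only: LA M)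
    note cs_root[OF X, of "mu_H ar" \<tau>, unfolded eq1 K'[OF vr]]
    then have "cs_step (mu_H ar) (Xi ar R enum)
            (AB \<sigma> f i (length cs) ls cs (T (subst \<sigma> (snd (cs!(length cs - 1)))))) (T (subst \<sigma> r))"
    proof -
      have lc: "1 \<le> length cs" using c by (simp add: Suc_leI)
      show ?thesis using tkj[OF lc order_refl] \<open>cs_step _ _ _ _\<close> by (simp add: ABd)
    qed
    then show ?thesis unfolding T_def .
  qed
  show "1 \<le> j \<Longrightarrow> j \<le> length cs \<Longrightarrow> (cs_step (mu_H ar) (Xi ar R enum))\<^sup>*\<^sup>* u u' \<Longrightarrow>
          (cs_step (mu_H ar) (Xi ar R enum))\<^sup>*\<^sup>* (AB \<sigma> f i j ls cs u) (AB \<sigma> f i j ls cs u')"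
  proof -
    assume j: "1 \<le> j" "j \<le> length cs" and st: "(cs_step (mu_H ar) (Xi ar R enum))\<^sup>*\<^sup>* u u'"
    define P where "P = map (T \<circ> subst \<sigma>) ls @ replicate (i-1) (hconst Top) @ map (T \<circ> subst \<sigma> \<circ> snd) (take (j-1) cs)"
    define C where "C = More (Aux f i j) P Hole (replicate (m-i) (hconst Top))"
    have "length P = ar f + (i - 1) + (j - 1)" using E(3) j by (simp add: P_def)
    then have "active_ctxt (mu_H ar) C" using i j by (simp add: C_def mu_H_def)
    from cs_ctxt_star[OF st this] show ?thesis by (simp add: C_def P_def ABd)
  qed
qed

end

context cset begin

lemma sim_chain:
  assumes i: "1 \<le> i" "i \<le> mcount enum f" and e: "enum f ! (i-1) = (Fun f ls, r, cs)"
    and xs: "distinct xs" "length xs = mcount enum f" "set xs \<inter> rule_vars (Fun f ls, r, cs) = {}"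
  shows "n < length cs \<Longrightarrow> (\<forall>k<n. (cs_step (mu_H ar) (Xi ar R enum))\<^sup>*\<^sup>* (xi enum Top (subst \<sigma> (fst (cs!k)))) (xi enum Top (subst \<sigma> (snd (cs!k))))) \<Longrightarrow>
    (cs_step (mu_H ar) (Xi ar R enum))\<^sup>+\<^sup>+ (xi enum Top (subst \<sigma> (Fun f ls))) (AB \<sigma> f i (Suc n) ls cs (xi enum Top (subst \<sigma> (fst (cs!n)))))"
proof (induction n)
  case 0
  then have "cs \<noteq> []" by auto
  from sim_rule(2)[OF i e xs this] show ?case by auto
next
  case (Suc n)
  from Suc.prems have ih: "(cs_step (mu_H ar) (Xi ar R enum))\<^sup>+\<^sup>+ (xi enum Top (subst \<sigma> (Fun f ls))) (AB \<sigma> f i (Suc n) ls cs (xi enum Top (subst \<sigma> (fst (cs!n)))))"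
    by (intro Suc.IH) auto
  have A: "(cs_step (mu_H ar) (Xi ar R enum))\<^sup>*\<^sup>* (AB \<sigma> f i (Suc n) ls cs (xi enum Top (subst \<sigma> (fst (cs!n)))))
     (AB \<sigma> f i (Suc n) ls cs (xi enum Top (subst \<sigma> (snd (cs!n)))))"
    using Suc.prems by (intro sim_rule(5)[OF i e xs]) auto
  have B: "cs_step (mu_H ar) (Xi ar R enum) (AB \<sigma> f i (Suc n) ls cs (xi enum Top (subst \<sigma> (snd (cs!n)))))
     (AB \<sigma> f i (Suc (Suc n)) ls cs (xi enum Top (subst \<sigma> (fst (cs!Suc n)))))"
    using sim_rule(3)[OF i e xs, of "Suc n" \<sigma>] Suc.prems by simp
  show ?case by (rule tranclp.trancl_into_trancl[OF tranclp_rtranclp_tranclp[OF ih A] B])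
qed

lemma rule_setup: assumes "(Fun f ls, r, cs) \<in> R"
  obtains i xs where "1 \<le> i" "i \<le> mcount enum f" "enum f ! (i-1) = (Fun f ls, r, cs)"
    "distinct xs" "length xs = mcount enum f" "set xs \<inter> rule_vars (Fun f ls, r, cs) = {}"
proof -
  from rule_index[OF assms] obtain i where i: "1 \<le> i" "i \<le> mcount enum f" "enum f ! (i-1) = (Fun f ls, r, cs)" by blast
  from fresh_list[OF inf finite_rule_vars] obtain xs where
    "distinct xs" "length xs = mcount enum f" "set xs \<inter> rule_vars (Fun f ls, r, cs) = {}" by blast
  with i that show ?thesis by blast
qed

lemma sim_apply: assumes r: "(Fun f ls, r, cs) \<in> R"
  and c: "\<forall>k<length cs. (cs_step (mu_H ar) (Xi ar R enum))\<^sup>*\<^sup>* (xi enum Top (subst \<sigma> (fst (cs!k)))) (xi enum Top (subst \<sigma> (snd (cs!k))))"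
  shows "(cs_step (mu_H ar) (Xi ar R enum))\<^sup>+\<^sup>+ (xi enum Top (subst \<sigma> (Fun f ls))) (xi enum Top (subst \<sigma> r))"
proof -
  obtain i xs where i: "1 \<le> i" "i \<le> mcount enum f" and e: "enum f ! (i-1) = (Fun f ls, r, cs)"
    and xs: "distinct xs" "length xs = mcount enum f" "set xs \<inter> rule_vars (Fun f ls, r, cs) = {}"
    by (rule rule_setup[OF r])
  show ?thesis
  proof (cases "cs = []")
    case True then show ?thesis using sim_rule(1)[OF i e xs] by auto
  next
    case False
    then have n: "length cs - 1 < length cs" by simp
    have s1: "(cs_step (mu_H ar) (Xi ar R enum))\<^sup>+\<^sup>+ (xi enum Top (subst \<sigma> (Fun f ls)))
       (AB \<sigma> f i (length cs) ls cs (xi enum Top (subst \<sigma> (fst (cs!(length cs - 1))))))"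
      using sim_chain[OF i e xs n] c False by simp
    have s2: "(cs_step (mu_H ar) (Xi ar R enum))\<^sup>*\<^sup>* (AB \<sigma> f i (length cs) ls cs (xi enum Top (subst \<sigma> (fst (cs!(length cs - 1))))))
       (AB \<sigma> f i (length cs) ls cs (xi enum Top (subst \<sigma> (snd (cs!(length cs - 1))))))"
      using c False by (intro sim_rule(5)[OF i e xs]) (auto simp: Suc_leI)
    have s3: "cs_step (mu_H ar) (Xi ar R enum) (AB \<sigma> f i (length cs) ls cs (xi enum Top (subst \<sigma> (snd (cs!(length cs - 1))))))
      (xi enum Top (subst \<sigma> r))" using sim_rule(4)[OF i e xs False] .
    show ?thesis by (rule tranclp.trancl_into_trancl[OF tranclp_rtranclp_tranclp[OF s1 s2] s3])
  qed
qed

lemma sim_sqsup: assumes r: "(Fun f ls, r, cs) \<in> R" and n: "n < length cs"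
  and c: "\<forall>k<n. (cs_step (mu_H ar) (Xi ar R enum))\<^sup>*\<^sup>* (xi enum Top (subst \<sigma> (fst (cs!k)))) (xi enum Top (subst \<sigma> (snd (cs!k))))"
  shows "\<exists>C. active_ctxt (mu_H ar) C \<and> (cs_step (mu_H ar) (Xi ar R enum))\<^sup>+\<^sup>+ (xi enum Top (subst \<sigma> (Fun f ls))) (plug C (xi enum Top (subst \<sigma> (fst (cs!n)))))"
proof -
  obtain i xs where i: "1 \<le> i" "i \<le> mcount enum f" and e: "enum f ! (i-1) = (Fun f ls, r, cs)"
    and xs: "distinct xs" "length xs = mcount enum f" "set xs \<inter> rule_vars (Fun f ls, r, cs) = {}"
    by (rule rule_setup[OF r])
  note E = enum_rule[OF i e]
  define P where "P = map (xi enum Top \<circ> subst \<sigma>) ls @ replicate (i-1) (hconst Top) @ map (xi enum Top \<circ> subst \<sigma> \<circ> snd) (take n cs)"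
  define C where "C = More (Aux f i (Suc n)) P Hole (replicate (mcount enum f - i) (hconst Top))"
  have "length P = ar f + (i - 1) + n" using E(3) n by (simp add: P_def)
  then have "active_ctxt (mu_H ar) C" using i by (simp add: C_def mu_H_def)
  moreover have "AB \<sigma> f i (Suc n) ls cs u = plug C u" for u by (simp add: AB_def C_def P_def)
  ultimately show ?thesis using sim_chain[OF i e xs n c] by metis
qed

lemma conds_wf:
  assumes r: "(Fun f ls, r, cs) \<in> R" and w: "wf_term ar (subst \<sigma> (Fun f ls))"
    and H: "\<forall>j<length cs. wf_term ar (subst \<sigma> (fst (cs!j))) \<longrightarrow> wf_term ar (subst \<sigma> (snd (cs!j))) \<and>
      (cs_step (mu_H ar) (Xi ar R enum))\<^sup>*\<^sup>* (xi enum Top (subst \<sigma> (fst (cs!j)))) (xi enum Top (subst \<sigma> (snd (cs!j))))"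
  shows "k \<le> length cs \<Longrightarrow> (\<forall>j<k. wf_term ar (subst \<sigma> (snd (cs!j))) \<and> wf_term ar (subst \<sigma> (fst (cs!j))) \<and>
      (cs_step (mu_H ar) (Xi ar R enum))\<^sup>*\<^sup>* (xi enum Top (subst \<sigma> (fst (cs!j)))) (xi enum Top (subst \<sigma> (snd (cs!j))))) \<and>
    (\<forall>x\<in>(\<Union>l\<in>set ls. vars l) \<union> (\<Union>b\<in>set (take k (map snd cs)). vars b). wf_term ar (\<sigma> x))"
proof (induction k)
  case 0
  then show ?case using w by (simp add: wf_subst)
next
  case (Suc k)
  from rule_R[OF r] have rr: "(\<forall>(a, b) \<in> set cs. wf_term ar a \<and> wf_term ar b)"
    "\<forall>i < length cs. vars (fst (cs ! i)) \<subseteq> vars (Fun f ls) \<union> (\<Union>b \<in> set (take i (map snd cs)). vars b)" by auto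
  from Suc have ih: "\<forall>j<k. wf_term ar (subst \<sigma> (snd (cs!j))) \<and> wf_term ar (subst \<sigma> (fst (cs!j))) \<and>
      (cs_step (mu_H ar) (Xi ar R enum))\<^sup>*\<^sup>* (xi enum Top (subst \<sigma> (fst (cs!j)))) (xi enum Top (subst \<sigma> (snd (cs!j))))"
    "\<forall>x\<in>(\<Union>l\<in>set ls. vars l) \<union> (\<Union>b\<in>set (take k (map snd cs)). vars b). wf_term ar (\<sigma> x)" by auto
  have k: "k < length cs" using Suc by simp
  have ck: "cs ! k \<in> set cs" using k by simp
  have wa: "wf_term ar (fst (cs ! k))" "wf_term ar (snd (cs ! k))" using rr(1) ck by auto
  have "vars (fst (cs ! k)) \<subseteq> (\<Union>l\<in>set ls. vars l) \<union> (\<Union>b \<in> set (take k (map snd cs)). vars b)"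
    using rr(2) k by simp
  then have wak: "wf_term ar (subst \<sigma> (fst (cs!k)))" using ih(2) wa by (auto simp: wf_subst)
  with H k have hk: "wf_term ar (subst \<sigma> (snd (cs!k)))"
    "(cs_step (mu_H ar) (Xi ar R enum))\<^sup>*\<^sup>* (xi enum Top (subst \<sigma> (fst (cs!k)))) (xi enum Top (subst \<sigma> (snd (cs!k))))" by auto
  have tk: "take (Suc k) (map snd cs) = take k (map snd cs) @ [snd (cs ! k)]" using k by (simp add: take_Suc_conv_app_nth)
  have "\<forall>x\<in>vars (snd (cs!k)). wf_term ar (\<sigma> x)" using hk(1) by (simp add: wf_subst)
  then have "\<forall>x\<in>(\<Union>l\<in>set ls. vars l) \<union> (\<Union>b\<in>set (take (Suc k) (map snd cs)). vars b). wf_term ar (\<sigma> x)"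
    using ih(2) tk by auto
  moreover have "\<forall>j<Suc k. wf_term ar (subst \<sigma> (snd (cs!j))) \<and> wf_term ar (subst \<sigma> (fst (cs!j))) \<and>
      (cs_step (mu_H ar) (Xi ar R enum))\<^sup>*\<^sup>* (xi enum Top (subst \<sigma> (fst (cs!j)))) (xi enum Top (subst \<sigma> (snd (cs!j))))"
    using ih(1) hk wak less_Suc_eq by auto
  ultimately show ?case by blast
qed

lemma star_conv: "(\<lambda>x y. rstep R x y \<and> (wf_term ar x \<longrightarrow> wf_term ar y \<and> (cs_step (mu_H ar) (Xi ar R enum))\<^sup>+\<^sup>+ (xi enum Top x) (xi enum Top y)))\<^sup>*\<^sup>* x y
  \<Longrightarrow> wf_term ar x \<Longrightarrow> wf_term ar y \<and> (cs_step (mu_H ar) (Xi ar R enum))\<^sup>*\<^sup>* (xi enum Top x) (xi enum Top y)"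
  by (induction rule: rtranclp_induct) (auto intro: rtranclp_trans tranclp_into_rtranclp)

lemma rstep_sim: "rstep R u v \<Longrightarrow> wf_term ar u \<Longrightarrow> wf_term ar v \<and> (cs_step (mu_H ar) (Xi ar R enum))\<^sup>+\<^sup>+ (xi enum Top u) (xi enum Top v)"
proof (induction rule: rstep.induct)
  case (1 l r cs \<sigma> C)
  from rule_R[OF 1(1)] obtain f ls where l: "l = Fun f ls" and rr: "wf_term ar r"
    "vars r \<subseteq> vars (Fun f ls) \<union> (\<Union>b \<in> set (map snd cs). vars b)" by blast
  have rin: "(Fun f ls, r, cs) \<in> R" using 1(1) l by simp
  have wl: "wf_term ar (subst \<sigma> (Fun f ls))" using 1(3) wf_plug(1) l by blast
  have H: "\<forall>j<length cs. wf_term ar (subst \<sigma> (fst (cs!j))) \<longrightarrow> wf_term ar (subst \<sigma> (snd (cs!j))) \<and>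
      (cs_step (mu_H ar) (Xi ar R enum))\<^sup>*\<^sup>* (xi enum Top (subst \<sigma> (fst (cs!j)))) (xi enum Top (subst \<sigma> (snd (cs!j))))"
    using 1(2) star_conv by blast
  note CW = conds_wf[OF rin wl H order_refl]
  have "\<forall>x\<in>vars r. wf_term ar (\<sigma> x)" using CW rr(2) by auto
  then have wr: "wf_term ar (subst \<sigma> r)" using rr(1) by (simp add: wf_subst)
  have st: "(cs_step (mu_H ar) (Xi ar R enum))\<^sup>+\<^sup>+ (xi enum Top (subst \<sigma> (Fun f ls))) (xi enum Top (subst \<sigma> r))"
    using sim_apply[OF rin] CW by blast
  have act: "active_ctxt (mu_H ar) (xic enum C)" using 1(3) xic_active by blast
  show ?case using wf_plug(2)[OF 1(3) wr] cs_ctxt_plus[OF st act] l by (simp add: xi_plug)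
qed

lemma rsteps_sim: "(rstep R)\<^sup>*\<^sup>* u v \<Longrightarrow> wf_term ar u \<Longrightarrow> wf_term ar v \<and> (cs_step (mu_H ar) (Xi ar R enum))\<^sup>*\<^sup>* (xi enum Top u) (xi enum Top v)"
  by (induction rule: rtranclp_induct) (auto dest: rstep_sim intro: rtranclp_trans tranclp_into_rtranclp)

lemma sqsup_sim: "sqsup R u v \<Longrightarrow> wf_term ar u \<Longrightarrow> wf_term ar v \<and>
   (\<exists>C. active_ctxt (mu_H ar) C \<and> (cs_step (mu_H ar) (Xi ar R enum))\<^sup>+\<^sup>+ (xi enum Top u) (plug C (xi enum Top v)))"
proof -
  assume "sqsup R u v" and wu: "wf_term ar u"
  then obtain C l r cs \<sigma> n where s: "(l, r, cs) \<in> R" "n < length cs" "u = plug C (subst \<sigma> l)"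
    "\<forall>j < n. (rstep R)\<^sup>*\<^sup>* (subst \<sigma> (fst (cs ! j))) (subst \<sigma> (snd (cs ! j)))" "v = subst \<sigma> (fst (cs ! n))"
    unfolding sqsup_def by blast
  from rule_R[OF s(1)] obtain f ls where l: "l = Fun f ls"
    and rr: "\<forall>(a, b) \<in> set cs. wf_term ar a \<and> wf_term ar b"
    "\<forall>i < length cs. vars (fst (cs ! i)) \<subseteq> vars (Fun f ls) \<union> (\<Union>b \<in> set (take i (map snd cs)). vars b)" by blast
  have rin: "(Fun f ls, r, cs) \<in> R" using s(1) l by simp
  have wl: "wf_term ar (subst \<sigma> (Fun f ls))" using wu s(3) wf_plug(1) l by blast
  define cs' where "cs' = take n cs"
  have rin': "(Fun f ls, r, cs) \<in> R" using rin .
  have H: "\<forall>j<n. wf_term ar (subst \<sigma> (fst (cs!j))) \<longrightarrow> wf_term ar (subst \<sigma> (snd (cs!j))) \<and>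
      (cs_step (mu_H ar) (Xi ar R enum))\<^sup>*\<^sup>* (xi enum Top (subst \<sigma> (fst (cs!j)))) (xi enum Top (subst \<sigma> (snd (cs!j))))"
    using s(4) rsteps_sim by blast
  have CW: "(\<forall>j<k. wf_term ar (subst \<sigma> (snd (cs!j))) \<and> wf_term ar (subst \<sigma> (fst (cs!j))) \<and>
      (cs_step (mu_H ar) (Xi ar R enum))\<^sup>*\<^sup>* (xi enum Top (subst \<sigma> (fst (cs!j)))) (xi enum Top (subst \<sigma> (snd (cs!j))))) \<and>
    (\<forall>x\<in>(\<Union>l\<in>set ls. vars l) \<union> (\<Union>b\<in>set (take k (map snd cs)). vars b). wf_term ar (\<sigma> x))" if "k \<le> n" for k
    using that
  proof (induction k)
    case 0 then show ?case using wl by (simp add: wf_subst)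
  next
    case (Suc k)
    from Suc have ih: "\<forall>j<k. wf_term ar (subst \<sigma> (snd (cs!j))) \<and> wf_term ar (subst \<sigma> (fst (cs!j))) \<and>
      (cs_step (mu_H ar) (Xi ar R enum))\<^sup>*\<^sup>* (xi enum Top (subst \<sigma> (fst (cs!j)))) (xi enum Top (subst \<sigma> (snd (cs!j))))"
      "\<forall>x\<in>(\<Union>l\<in>set ls. vars l) \<union> (\<Union>b\<in>set (take k (map snd cs)). vars b). wf_term ar (\<sigma> x)" by auto
    have k: "k < length cs" "k < n" using Suc s(2) by auto
    have ck: "cs ! k \<in> set cs" using k by simp
    have wa: "wf_term ar (fst (cs ! k))" "wf_term ar (snd (cs ! k))" using rr(1) ck by auto
    have "vars (fst (cs ! k)) \<subseteq> (\<Union>l\<in>set ls. vars l) \<union> (\<Union>b \<in> set (take k (map snd cs)). vars b)"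
      using rr(2) k by simp
    then have wak: "wf_term ar (subst \<sigma> (fst (cs!k)))" using ih(2) wa by (auto simp: wf_subst)
    with H k have hk: "wf_term ar (subst \<sigma> (snd (cs!k)))"
      "(cs_step (mu_H ar) (Xi ar R enum))\<^sup>*\<^sup>* (xi enum Top (subst \<sigma> (fst (cs!k)))) (xi enum Top (subst \<sigma> (snd (cs!k))))" by auto
    have tk: "take (Suc k) (map snd cs) = take k (map snd cs) @ [snd (cs ! k)]" using k by (simp add: take_Suc_conv_app_nth)
    have "\<forall>x\<in>vars (snd (cs!k)). wf_term ar (\<sigma> x)" using hk(1) by (simp add: wf_subst)
    then have "\<forall>x\<in>(\<Union>l\<in>set ls. vars l) \<union> (\<Union>b\<in>set (take (Suc k) (map snd cs)). vars b). wf_term ar (\<sigma> x)"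
      using ih(2) tk by auto
    moreover have "\<forall>j<Suc k. wf_term ar (subst \<sigma> (snd (cs!j))) \<and> wf_term ar (subst \<sigma> (fst (cs!j))) \<and>
      (cs_step (mu_H ar) (Xi ar R enum))\<^sup>*\<^sup>* (xi enum Top (subst \<sigma> (fst (cs!j)))) (xi enum Top (subst \<sigma> (snd (cs!j))))"
      using ih(1) hk wak less_Suc_eq by auto
    ultimately show ?case by blast
  qed
  note CWn = CW[OF order_refl]
  have cn: "cs ! n \<in> set cs" using s(2) by simp
  have "vars (fst (cs ! n)) \<subseteq> (\<Union>l\<in>set ls. vars l) \<union> (\<Union>b \<in> set (take n (map snd cs)). vars b)"
    using rr(2) s(2) by simp
  then have wv: "wf_term ar v" using CWn rr(1) cn s(5) by (auto simp: wf_subst)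
  have c: "\<forall>k<n. (cs_step (mu_H ar) (Xi ar R enum))\<^sup>*\<^sup>* (xi enum Top (subst \<sigma> (fst (cs!k)))) (xi enum Top (subst \<sigma> (snd (cs!k))))"
    using CWn by blast
  obtain D where D: "active_ctxt (mu_H ar) D"
    "(cs_step (mu_H ar) (Xi ar R enum))\<^sup>+\<^sup>+ (xi enum Top (subst \<sigma> (Fun f ls))) (plug D (xi enum Top (subst \<sigma> (fst (cs!n)))))"
    using sim_sqsup[OF rin s(2) c] by (elim exE conjE)
  have act: "active_ctxt (mu_H ar) (xic enum C)" using wu s(3) xic_active by blast
  have "(cs_step (mu_H ar) (Xi ar R enum))\<^sup>+\<^sup>+ (xi enum Top u) (plug (ccomp (xic enum C) D) (xi enum Top v))"
    using cs_ctxt_plus[OF D(2) act] s(3,5) l by (simp add: xi_plug)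
  moreover have "active_ctxt (mu_H ar) (ccomp (xic enum C) D)" using act D(1) by (rule active_comp)
  ultimately show ?thesis using wv by blast
qed

end

lemma hinv_noaux: "noaux t \<Longrightarrow> hinv ar R enum t"
proof (induction t)
  case (Fun g ts) then show ?case by (cases g) auto
qed simp

lemma noaux_zeta: "noaux (zeta enum s)"
  by (induction enum s rule: zeta.induct) auto

lemma wf_phi_zeta: "wf_gterm ar R s \<Longrightarrow> wf_term ar (phi ar (zeta enum s))"
  by (induction enum s rule: zeta.induct) auto

fun lab :: "('f, 'v) crule set \<Rightarrow> ('f, 'v) term \<Rightarrow> (('f, 'v) gsym, 'v) term" where
  "lab R (Var x) = Var x"
| "lab R (Fun f ts) = Fun (if defined R f then GLab f (rules_of R f) else GCon f) (map (lab R) ts)"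

lemma csr_plus: "(cs_step mu S)\<^sup>+\<^sup>+ a b \<Longrightarrow> (b, a) \<in> {(y, x). cs_step mu S x y}\<^sup>+"
  by (induction rule: tranclp_induct) (auto intro: trancl_into_trancl2)

context cset begin

lemma wf_lab: "wf_term ar s \<Longrightarrow> wf_gterm ar R (lab R s)"
  by (induction s) (auto simp: rules_of_def)

lemma zeta_lab: "zeta enum (lab R s) = xi enum Top s"
proof (induction s)
  case (Fun f ts)
  show ?case
  proof (cases "defined R f")
    case True
    have "map (\<lambda>\<rho>. if \<rho> \<in> rules_of R f then hconst Top else hconst Bot) (enum f) = replicate (mcount enum f) (hconst Top)"
      using en unfolding enumeration_def mcount_def by (simp add: map_replicate_const[symmetric] cong: map_cong)
    then show ?thesis using Fun True by simp
  next
    case False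
    then show ?thesis using Fun mcount_constr by simp
  qed
qed simp

lemma term_acc: "terminating_on (cs_step (mu_H ar) (Xi ar R enum)) A \<Longrightarrow> t \<in> A \<Longrightarrow> t \<in> Wellfounded.acc csr"
proof (rule ccontr)
  assume T: "terminating_on (cs_step (mu_H ar) (Xi ar R enum)) A" and tA: "t \<in> A" and na: "t \<notin> Wellfounded.acc csr"
  from chain_not_acc[OF na] obtain f where "f 0 = t" "\<forall>i. (f (Suc i), f i) \<in> csr" by blast
  then show False using T tA unfolding terminating_on_def csr_def by blast
qed

lemma dir1: "quasi_decreasing ar R \<Longrightarrow> terminating_on (cs_step (mu_H ar) (Xi ar R enum)) {zeta enum s | s. wf_gterm ar R s}"
  unfolding terminating_on_def
proof (intro ballI notI)
  fix t assume qd: "quasi_decreasing ar R" and "t \<in> {zeta enum s | s. wf_gterm ar R s}"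
  then obtain s where s: "t = zeta enum s" "wf_gterm ar R s" by blast
  assume "\<exists>u. u 0 = t \<and> (\<forall>i. cs_step (mu_H ar) (Xi ar R enum) (u i) (u (Suc i)))"
  then obtain u where u: "u 0 = t" "\<forall>i. (u (Suc i), u i) \<in> csr" unfolding csr_def by blast
  have "quasi_decreasing_term R (phi ar t)" using qd wf_phi_zeta[OF s(2)] s(1) unfolding quasi_decreasing_def by blast
  from main_sn[OF qd_acc_comb[OF this]] have "t \<in> Wellfounded.acc csr"
    using hinv_noaux[OF noaux_zeta] s(1) by blast
  from acc_no_chain[OF this] u show False by blast
qed

lemma dir2: "terminating_on (cs_step (mu_H ar) (Xi ar R enum)) {zeta enum s | s. wf_gterm ar R s} \<Longrightarrow> quasi_decreasing ar R"
  unfolding quasi_decreasing_def quasi_decreasing_term_def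
proof (intro allI impI notI)
  fix s :: "('f, 'v) term" assume T: "terminating_on (cs_step (mu_H ar) (Xi ar R enum)) {zeta enum s | s. wf_gterm ar R s}"
    and ws: "wf_term ar s"
  assume "\<exists>u. u 0 = s \<and> (\<forall>i. rstep R (u i) (u (Suc i)) \<or> sqsup R (u i) (u (Suc i)))"
  then obtain u where u0: "u 0 = s" and us: "\<forall>i. rstep R (u i) (u (Suc i)) \<or> sqsup R (u i) (u (Suc i))" by blast
  have wu: "wf_term ar (u i)" for i
  proof (induction i)
    case 0 then show ?case using u0 ws by simp
  next
    case (Suc i) then show ?case using us rstep_sim sqsup_sim by blast
  qed
  have "\<forall>i. \<exists>C. active_ctxt (mu_H ar) C \<and> (cs_step (mu_H ar) (Xi ar R enum))\<^sup>+\<^sup>+ (xi enum Top (u i)) (plug C (xi enum Top (u (Suc i))))"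
  proof
    fix i
    from us consider "rstep R (u i) (u (Suc i))" | "sqsup R (u i) (u (Suc i))" by blast
    then show "\<exists>C. active_ctxt (mu_H ar) C \<and> (cs_step (mu_H ar) (Xi ar R enum))\<^sup>+\<^sup>+ (xi enum Top (u i)) (plug C (xi enum Top (u (Suc i))))"
    proof cases
      case 1 then show ?thesis using rstep_sim[OF 1 wu] by (intro exI[of _ Hole]) simp
    next
      case 2 then show ?thesis using sqsup_sim[OF 2 wu] by blast
    qed
  qed
  then obtain Cf where Cf: "\<And>i. active_ctxt (mu_H ar) (Cf i) \<and> (cs_step (mu_H ar) (Xi ar R enum))\<^sup>+\<^sup>+ (xi enum Top (u i)) (plug (Cf i) (xi enum Top (u (Suc i))))"
    by metis
  define D where "D = rec_nat Hole (\<lambda>i Di. ccomp Di (Cf i))"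
  have D0: "D 0 = Hole" and DS: "D (Suc i) = ccomp (D i) (Cf i)" for i by (simp_all add: D_def)
  have Dact: "active_ctxt (mu_H ar) (D i)" for i
    by (induction i) (simp_all add: D0 DS active_comp Cf)
  define w where "w = (\<lambda>i. plug (D i) (xi enum Top (u i)))"
  have "(cs_step (mu_H ar) (Xi ar R enum))\<^sup>+\<^sup>+ (w i) (w (Suc i))" for i
    using cs_ctxt_plus[OF conjunct2[OF Cf[of i]] Dact[of i]] by (simp add: w_def DS)
  then have ch: "\<forall>i. (w (Suc i), w i) \<in> csr\<^sup>+" using csr_plus unfolding csr_def by blast
  have "w 0 = zeta enum (lab R s)" using u0 by (simp add: w_def D0 zeta_lab)
  moreover have "zeta enum (lab R s) \<in> {zeta enum s | s. wf_gterm ar R s}" using wf_lab[OF ws] by blast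
  ultimately have "w 0 \<in> Wellfounded.acc csr" using term_acc[OF T] by simp
  from acc_no_chain[OF acc_trancl[OF this]] ch show False by blast
qed

end

theorem corollary5:
  fixes ar :: "'f \<Rightarrow> nat"
    and R :: "('f, 'v) crule set"
    and enum :: "'f \<Rightarrow> ('f, 'v) crule list"
  assumes "infinite (UNIV :: 'v set)"
    and "strong_cctrs ar R"
    and "enumeration R enum"
  shows "quasi_decreasing ar R \<longleftrightarrow>
    terminating_on (cs_step (mu_H ar) (Xi ar R enum))
      {zeta enum s | s. wf_gterm ar R s}"
proof -
  interpret cset ar R enum using assms by unfold_locales
  show ?thesis using dir1 dir2 by blast
qed

end
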